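(* Let $\Omega\subset\mathbb{R}^N$ be open and bounded, $\varepsilon>0$, $c_{11},c_{22}\le0$, $K$ admissible, $m_r,m_b>0$ with $m_r+m_b<|\Omega|$, and let $(\underline r,\underline b)\in\mathcal A$ be a minimizer of $F^\varepsilon$ over $\mathcal A$; set $\underline\rho=\underline r+\underline b$. Then for every $\phi\in L^\infty(\Omega)$ with $\int_\Omega\phi\,dx=0$, $$\int_\Omega\phi\Big(\varepsilon\big(\log\underline r-\log(1-\underline\rho)\big)+2\big(c_{11}K*\underline r-K*\underline b\big)\Big)dx=0,$$ $$\int_\Omega\phi\Big(\varepsilon\big(\log\underline b-\log(1-\underline\rho)\big)+2\big(c_{22}K*\underline b-K*\underline r\big)\Big)dx=0.$$ Consequently there exist constants $C_1,C_2\in\mathbb R$ (depending only on $\varepsilon,\underline r,\underline b,c_{11},c_{22},\Omega$) such that for a.e. $x\in\Omega$ $$\varepsilon[\log\underline r-\log(1-\underline\rho)]+2(c_{11}K*\underline r-K*\underline b)=C_1,\qquad \varepsilon[\log\underline b-\log(1-\underline\rho)]+2(c_{22}K*\underline b-K*\underline r)=C_2.$$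
   Context: Let $N\ge1$ and $\Omega\subset\mathbb{R}^N$ open. The Coulomb kernel on $\mathbb{R}^N$ is $K_N(x)=-\frac12|x|$ for $N=1$, $K_N(x)=-\frac1{2\pi}\log|x|$ for $N=2$, and $K_N(x)=\frac{1}{(N-2)\omega_N}|x|^{2-N}$ for $N\ge3$. A kernel $K$ is called admissible if (K1) $K\in W^{1,1}_{loc}(\Omega)$; (K2) $K(x)=k(|x|)$ with $k$ non-increasing; (K3) as $x\to0$ and as $|x|\to\infty$, $K$ is at most as singular as $K_N$. For densities $r,b$ write $\rho=r+b$ and $K*r(x)=\int_\Omega K(x-y)r(y)\,dy$. Define $F^E(r,b)=\int_\Omega r\log r+b\log b+(1-\rho)\log(1-\rho)\,dx$, $F^0(r,b)=\int_\Omega c_{11}r(K*r)-r(K*b)-b(K*r)+c_{22}b(K*b)\,dx$, $F^\varepsilon=\varepsilon F^E+F^0$. The admissible set is $\mathcal A=\{(r,b)\in L^1(\Omega;[0,\infty))^2:\int_\Omega r=m_r,\ \int_\Omega b=m_b,\ r+b\le1\text{ a.e.}\}$. *)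

theory Defs
  imports "HOL-Analysis.Analysis"
begin

(* omega_N = surface area of the unit sphere in R^N = N * |unit ball| *)
definition omega_N :: "'a::euclidean_space itself \<Rightarrow> real" where
  "omega_N _ = real DIM('a) * measure lborel (ball (0::'a) 1)"

definition coulomb :: "'a::euclidean_space \<Rightarrow> real" where
  "coulomb x =
     (if DIM('a) = 1 then - (1/2) * norm x
      else if DIM('a) = 2 then - (1 / (2*pi)) * ln (norm x)
      else (1 / ((real DIM('a) - 2) * omega_N TYPE('a))) * norm x powr (2 - real DIM('a)))"

fun Ck :: "nat \<Rightarrow> ('a::euclidean_space \<Rightarrow> real) \<Rightarrow> bool" where
  "Ck 0 f = continuous_on UNIV f"
| "Ck (Suc k) f = (continuous_on UNIV f \<and> (\<forall>x. f differentiable (at x)) \<and>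
                    (\<forall>i\<in>Basis. Ck k (\<lambda>x. frechet_derivative f (at x) i)))"

definition test_function :: "'a::euclidean_space set \<Rightarrow> ('a \<Rightarrow> real) \<Rightarrow> bool" where
  "test_function \<Omega> \<phi> \<longleftrightarrow> (\<forall>k. Ck k \<phi>) \<and>
     (\<exists>C. compact C \<and> C \<subseteq> \<Omega> \<and> (\<forall>x. x \<notin> C \<longrightarrow> \<phi> x = 0))"

definition locally_integrable_on :: "('a::euclidean_space \<Rightarrow> 'b::{banach,second_countable_topology}) \<Rightarrow> 'a set \<Rightarrow> bool" where
  "locally_integrable_on f \<Omega> \<longleftrightarrow> (\<forall>C. compact C \<and> C \<subseteq> \<Omega> \<longrightarrow> integrable (lebesgue_on C) f)"

definition W11_loc :: "('a::euclidean_space \<Rightarrow> real) \<Rightarrow> 'a set \<Rightarrow> bool" where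
  "W11_loc f \<Omega> \<longleftrightarrow> (\<exists>g::'a \<Rightarrow> 'a.
      locally_integrable_on f \<Omega> \<and> locally_integrable_on g \<Omega> \<and>
      (\<forall>\<phi>. test_function \<Omega> \<phi> \<longrightarrow> (\<forall>i\<in>Basis.
         (\<integral>x. f x * frechet_derivative \<phi> (at x) i \<partial>lebesgue_on \<Omega>) =
         - (\<integral>x. (g x \<bullet> i) * \<phi> x \<partial>lebesgue_on \<Omega>))))"

definition admissible :: "'a::euclidean_space set \<Rightarrow> ('a \<Rightarrow> real) \<Rightarrow> bool" where
  "admissible \<Omega> K \<longleftrightarrow>
     W11_loc K \<Omega> \<and>
     (\<exists>k::real \<Rightarrow> real. (\<forall>x. x \<noteq> 0 \<longrightarrow> K x = k (norm x)) \<and> (\<forall>s t. 0 < s \<longrightarrow> s \<le> t \<longrightarrow> k t \<le> k s)) \<and>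
     (\<exists>C \<delta>. 0 < \<delta> \<and> (\<forall>x. 0 < norm x \<and> norm x < \<delta> \<longrightarrow> \<bar>K x\<bar> \<le> C * \<bar>coulomb x\<bar>)) \<and>
     (\<exists>C R. \<forall>x. norm x > R \<longrightarrow> \<bar>K x\<bar> \<le> C * \<bar>coulomb x\<bar>)"

definition conv :: "'a::euclidean_space set \<Rightarrow> ('a \<Rightarrow> real) \<Rightarrow> ('a \<Rightarrow> real) \<Rightarrow> 'a \<Rightarrow> real" where
  "conv \<Omega> K r x = (\<integral>y. K (x - y) * r y \<partial>lebesgue_on \<Omega>)"

definition F_E :: "'a::euclidean_space set \<Rightarrow> ('a \<Rightarrow> real) \<Rightarrow> ('a \<Rightarrow> real) \<Rightarrow> real" where
  "F_E \<Omega> r b = (\<integral>x. r x * ln (r x) + b x * ln (b x)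
                     + (1 - (r x + b x)) * ln (1 - (r x + b x)) \<partial>lebesgue_on \<Omega>)"

definition F_0 :: "'a::euclidean_space set \<Rightarrow> ('a \<Rightarrow> real) \<Rightarrow> real \<Rightarrow> real \<Rightarrow> ('a \<Rightarrow> real) \<Rightarrow> ('a \<Rightarrow> real) \<Rightarrow> real" where
  "F_0 \<Omega> K c11 c22 r b = (\<integral>x. c11 * r x * conv \<Omega> K r x - r x * conv \<Omega> K b x
        - b x * conv \<Omega> K r x + c22 * b x * conv \<Omega> K b x \<partial>lebesgue_on \<Omega>)"

definition F_eps :: "real \<Rightarrow> 'a::euclidean_space set \<Rightarrow> ('a \<Rightarrow> real) \<Rightarrow> real \<Rightarrow> real \<Rightarrow> ('a \<Rightarrow> real) \<Rightarrow> ('a \<Rightarrow> real) \<Rightarrow> real" where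
  "F_eps \<epsilon> \<Omega> K c11 c22 r b = \<epsilon> * F_E \<Omega> r b + F_0 \<Omega> K c11 c22 r b"

definition admissible_set :: "'a::euclidean_space set \<Rightarrow> real \<Rightarrow> real \<Rightarrow> (('a \<Rightarrow> real) \<times> ('a \<Rightarrow> real)) set" where
  "admissible_set \<Omega> mr mb = {(r, b).
      integrable (lebesgue_on \<Omega>) r \<and> integrable (lebesgue_on \<Omega>) b \<and>
      (AE x in lebesgue_on \<Omega>. 0 \<le> r x \<and> 0 \<le> b x \<and> r x + b x \<le> 1) \<and>
      (\<integral>x. r x \<partial>lebesgue_on \<Omega>) = mr \<and> (\<integral>x. b x \<partial>lebesgue_on \<Omega>) = mb}"

definition essentially_bounded :: "'a::euclidean_space set \<Rightarrow> ('a \<Rightarrow> real) \<Rightarrow> bool" where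
  "essentially_bounded \<Omega> \<phi> \<longleftrightarrow> \<phi> \<in> borel_measurable (lebesgue_on \<Omega>) \<and>
     (\<exists>C. AE x in lebesgue_on \<Omega>. \<bar>\<phi> x\<bar> \<le> C)"

end

theory Submission
  imports Defs
begin


lemma K_borel:
  fixes K :: "'a::euclidean_space \<Rightarrow> real"
  assumes k: "\<forall>x. x \<noteq> 0 \<longrightarrow> K x = k (norm x)" and mono: "\<forall>s t. 0 < s \<longrightarrow> s \<le> t \<longrightarrow> k t \<le> k s"
  shows "K \<in> borel_measurable borel"
proof -
  define g where "g s = - k (exp s)" for s
  have "mono g" unfolding mono_def g_def using mono by auto
  hence [measurable]: "g \<in> borel_measurable borel" by (rule borel_measurable_mono)
  have eq: "K = (\<lambda>z. if z = 0 then K 0 else - g (ln (norm z)))"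
    using k by (auto simp: g_def fun_eq_iff)
  show ?thesis by (subst eq) measurable
qed

lemma shell_integral:
  assumes D: "D > 0"
  shows "(\<integral>\<^sup>+ z. indicator (ball (0::'a::euclidean_space) D) z * ennreal (norm z powr (1 - real DIM('a))) \<partial>lborel) < \<infinity>"
proof -
  define N where "N = DIM('a)"
  define p where "p = 1 - real N"
  have p0: "p \<le> 0" using DIM_positive[where 'a='a] by (simp add: p_def N_def)
  define Sh where "Sh n = {z::'a. D / 2^Suc n \<le> norm z \<and> norm z < D / 2^n}" for n
  define c where "c n = (D / 2^Suc n) powr p" for n
  have Sh_meas[measurable]: "Sh n \<in> sets borel" for n
    unfolding Sh_def by measurable
  have pw: "indicator (ball 0 D) z * ennreal (norm z powr p) \<le> (\<Sum>n. ennreal (c n) * indicator (Sh n) z)" for z :: 'a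
  proof (cases "z = 0 \<or> norm z \<ge> D")
    case True then show ?thesis by (auto simp: indicator_def)
  next
    case False
    hence z0: "0 < norm z" and zD: "norm z < D" by auto
    have "\<exists>n. D / norm z < 2 ^ n" using real_arch_pow[of 2 "D / norm z"] by auto
    then have ex: "\<exists>n. D / 2 ^ n \<le> norm z" using z0
      by (metis divide_less_eq less_eq_real_def mult.commute pos_divide_le_eq zero_less_power zero_less_numeral)
    define n where "n = (LEAST n. D / 2 ^ n \<le> norm z)"
    have n1: "D / 2 ^ n \<le> norm z" unfolding n_def by (rule LeastI_ex[OF ex])
    have n0: "n \<noteq> 0"
    proof
      assume "n = 0" with n1 zD show False by simp
    qed
    then obtain m where m: "n = Suc m" by (cases n) auto
    have "\<not> D / 2 ^ m \<le> norm z" using not_less_Least[of m "\<lambda>n. D / 2 ^ n \<le> norm z"] m n_def by auto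
    hence zm: "z \<in> Sh m" using n1 m by (auto simp: Sh_def)
    have "norm z powr p \<le> c m" unfolding c_def
      by (rule powr_mono2'[OF p0]) (use zm in \<open>auto simp: Sh_def\<close>)
    hence "indicator (ball 0 D) z * ennreal (norm z powr p) \<le> ennreal (c m) * indicator (Sh m) z"
      using zm zD by (auto simp: indicator_def intro: ennreal_leI)
    also have "\<dots> \<le> (\<Sum>n. ennreal (c n) * indicator (Sh n) z)"
      using ennreal_suminf_lessD[of "\<lambda>n. ennreal (c n) * indicator (Sh n) z" "ennreal (c m) * indicator (Sh m) z" m]
      by (meson not_le order_less_irrefl)
    finally show ?thesis .
  qed
  have "(\<integral>\<^sup>+ z. indicator (ball (0::'a) D) z * ennreal (norm z powr p) \<partial>lborel)
      \<le> (\<integral>\<^sup>+ z. (\<Sum>n. ennreal (c n) * indicator (Sh n) z) \<partial>lborel)"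
    by (rule nn_integral_mono) (rule pw)
  also have "\<dots> = (\<Sum>n. \<integral>\<^sup>+ z. ennreal (c n) * indicator (Sh n) z \<partial>lborel)"
    by (rule nn_integral_suminf) measurable
  also have "\<dots> = (\<Sum>n. ennreal (c n) * emeasure lborel (Sh n))"
    by (simp add: nn_integral_cmult_indicator)
  also have "\<dots> \<le> (\<Sum>n. ennreal (c n) * emeasure lborel (ball (0::'a) (D / 2^n)))"
    by (intro suminf_le mult_left_mono emeasure_mono) (auto simp: Sh_def)
  also have "\<dots> = (\<Sum>n. ennreal (2^N * D * (1/2)^Suc n * unit_ball_vol N))"
  proof (intro suminf_cong)
    fix n
    define q where "q = D / 2 ^ Suc n"
    have q0: "q > 0" using D by (simp add: q_def)
    have "D / 2^n = 2 * q" by (simp add: q_def)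
    moreover have cq: "c n = q powr p" by (simp add: c_def q_def)
    ultimately have "c n * (unit_ball_vol N * (D / 2^n) ^ N) = unit_ball_vol N * 2^N * (q powr p * q powr (real N))"
      by (simp only: powr_realpow[OF q0] power_mult_distrib) (simp add: algebra_simps q0 abs_of_pos)
    also have "q powr p * q powr (real N) = q" using q0 by (simp add: powr_add[symmetric] p_def)
    finally have eqn: "c n * (unit_ball_vol N * (D / 2^n) ^ N) = 2^N * D * (1/2)^Suc n * unit_ball_vol N"
      by (simp add: q_def power_one_over field_simps)
    have "ennreal (c n) * emeasure lborel (ball (0::'a) (D / 2^n)) = ennreal (c n) * ennreal (unit_ball_vol N * (D/2^n)^N)"
      using D by (simp add: emeasure_ball N_def)
    also have "\<dots> = ennreal (c n * (unit_ball_vol N * (D/2^n)^N))"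
      by (rule ennreal_mult'[symmetric]) (simp add: c_def)
    finally show "ennreal (c n) * emeasure lborel (ball (0::'a) (D / 2^n)) = ennreal (2^N * D * (1/2)^Suc n * unit_ball_vol N)"
      by (simp only: eqn)
  qed
  also have "\<dots> < \<infinity>"
  proof -
    have "summable (\<lambda>n. 2^N * D * (1/2)^Suc n * unit_ball_vol N)"
      by (intro summable_mult2 summable_mult) (simp add: summable_geometric_iff)
    moreover have "\<And>n. 0 \<le> 2^N * D * (1/2::real)^Suc n * unit_ball_vol N"
      using D by simp
    ultimately show ?thesis using ennreal_suminf_neq_top by (auto simp: top.not_eq_extremum)
  qed
  finally show ?thesis by (simp add: p_def N_def)
qed



lemma coulomb_bound:
  "\<exists>cc\<ge>0. \<forall>z::'a::euclidean_space. 0 < norm z \<and> norm z < 1 \<longrightarrow>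
      \<bar>coulomb z\<bar> \<le> cc * norm z powr (1 - real DIM('a))"
proof (cases "DIM('a) = 1")
  case True
  show ?thesis
  proof (intro exI[of _ "1/2"] conjI allI impI)
    fix z :: 'a assume z: "0 < norm z \<and> norm z < 1"
    then show "\<bar>coulomb z\<bar> \<le> 1/2 * norm z powr (1 - real DIM('a))"
      using True by (simp add: coulomb_def)
  qed simp
next
  case F1: False
  show ?thesis
  proof (cases "DIM('a) = 2")
    case True
    show ?thesis
    proof (intro exI[of _ "1/(2*pi)"] conjI allI impI)
      fix z :: 'a assume z: "0 < norm z \<and> norm z < 1"
      have l: "ln (norm z) \<le> 0" using z by simp
      have "- ln (norm z) = ln (1 / norm z)" using z by (simp add: ln_div)
      also have "\<dots> \<le> 1 / norm z - 1" using z by (intro ln_le_minus_one) simp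
      finally have m: "- ln (norm z) \<le> 1 / norm z" by simp
      have e1: "norm z powr (1 - real DIM('a)) = 1 / norm z"
        using True z by (simp add: powr_minus_divide)
      have e2: "\<bar>coulomb z\<bar> = (- ln (norm z)) / (2*pi)"
        using True F1 l by (simp add: coulomb_def abs_mult)
      have "(- ln (norm z)) / (2*pi) \<le> (1/norm z)/(2*pi)"
        by (rule divide_right_mono[OF m]) simp
      then show "\<bar>coulomb z\<bar> \<le> 1/(2*pi) * norm z powr (1 - real DIM('a))"
        unfolding e1 e2 by (simp add: mult.commute)
    qed simp
  next
    case False
    define c where "c = 1 / ((real DIM('a) - 2) * omega_N TYPE('a))"
    have N3: "DIM('a) \<ge> 3" using F1 False DIM_positive[where 'a='a] by linarith
    have om: "omega_N TYPE('a) \<ge> 0" by (simp add: omega_N_def)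
    have c0: "c \<ge> 0" using N3 om by (simp add: c_def)
    show ?thesis
    proof (intro exI[of _ c] conjI allI impI)
      fix z :: 'a assume z: "0 < norm z \<and> norm z < 1"
      have "\<bar>coulomb z\<bar> = c * norm z powr (2 - real DIM('a))"
        using F1 False c0 by (simp add: coulomb_def c_def[symmetric] abs_mult)
      also have "\<dots> \<le> c * norm z powr (1 - real DIM('a))"
        using z c0 by (intro mult_left_mono powr_mono') auto
      finally show "\<bar>coulomb z\<bar> \<le> c * norm z powr (1 - real DIM('a))" .
    qed (rule c0)
  qed
qed

lemma K_pointwise_bound:
  fixes K :: "'a::euclidean_space \<Rightarrow> real"
  assumes adm: "admissible \<Omega> K" and D: "D > 0"
  shows "\<exists>C1 C2. 0 \<le> C1 \<and> 0 \<le> C2 \<and>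
     (\<forall>z. z \<noteq> 0 \<and> norm z < D \<longrightarrow> \<bar>K z\<bar> \<le> C1 * norm z powr (1 - real DIM('a)) + C2)"
proof -
  from adm obtain k where k: "\<forall>x. x \<noteq> 0 \<longrightarrow> K x = k (norm x)"
    and mono: "\<forall>s t. 0 < s \<longrightarrow> s \<le> t \<longrightarrow> k t \<le> k s"
    and "\<exists>C \<delta>. 0 < \<delta> \<and> (\<forall>x. 0 < norm x \<and> norm x < \<delta> \<longrightarrow> \<bar>K x\<bar> \<le> C * \<bar>coulomb x\<bar>)"
    unfolding admissible_def by blast
  then obtain C \<delta> where d0: "0 < \<delta>" and Cb: "\<forall>x. 0 < norm x \<and> norm x < \<delta> \<longrightarrow> \<bar>K x\<bar> \<le> C * \<bar>coulomb x\<bar>"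
    by blast
  obtain cc where cc0: "cc \<ge> 0" and cc: "\<forall>z::'a. 0 < norm z \<and> norm z < 1 \<longrightarrow>
      \<bar>coulomb z\<bar> \<le> cc * norm z powr (1 - real DIM('a))"
    using coulomb_bound by blast
  define d where "d = min \<delta> 1"
  have d: "0 < d" "d \<le> \<delta>" "d \<le> 1" using d0 by (auto simp: d_def)
  have main: "\<forall>z. z \<noteq> 0 \<and> norm z < D \<longrightarrow> \<bar>K z\<bar> \<le> \<bar>C\<bar> * cc * norm z powr (1 - real DIM('a)) + (\<bar>k D\<bar> + \<bar>k d\<bar>)"
  proof (intro allI impI)
    fix z :: 'a assume z: "z \<noteq> 0 \<and> norm z < D"
    have pw: "0 \<le> norm z powr (1 - real DIM('a))" by simp
    show "\<bar>K z\<bar> \<le> \<bar>C\<bar> * cc * norm z powr (1 - real DIM('a)) + (\<bar>k D\<bar> + \<bar>k d\<bar>)"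
    proof (cases "norm z < d")
      case True
      have "\<bar>K z\<bar> \<le> C * \<bar>coulomb z\<bar>" using Cb True d z by auto
      also have "\<dots> \<le> \<bar>C\<bar> * \<bar>coulomb z\<bar>" by (simp add: mult_right_mono)
      also have "\<dots> \<le> \<bar>C\<bar> * (cc * norm z powr (1 - real DIM('a)))"
        using cc True d z by (intro mult_left_mono) auto
      finally show ?thesis using pw by (simp add: mult.assoc)
    next
      case False
      have "k D \<le> k (norm z)" using mono False d z by auto
      moreover have "k (norm z) \<le> k d" using mono False d by auto
      ultimately have "\<bar>K z\<bar> \<le> \<bar>k D\<bar> + \<bar>k d\<bar>" using k z by auto
      moreover have "0 \<le> \<bar>C\<bar> * cc * norm z powr (1 - real DIM('a))" using cc0 by simp
      ultimately show ?thesis by linarith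
    qed
  qed
  show ?thesis
    by (rule exI[of _ "\<bar>C\<bar> * cc"], rule exI[of _ "\<bar>k D\<bar> + \<bar>k d\<bar>"]) (use cc0 main in auto)
qed



locale kset =
  fixes \<Omega> :: "'a::euclidean_space set" and K :: "'a \<Rightarrow> real"
  assumes op: "open \<Omega>" and bd: "bounded \<Omega>" and adm: "admissible \<Omega> K"
begin

lemma Om_sets[measurable]: "\<Omega> \<in> sets lebesgue"
  using op by (simp add: borel_open sets_completionI_sets)

lemma space_mu[simp]: "space (lebesgue_on \<Omega>) = \<Omega>"
  by simp

lemma K_borel[measurable]: "K \<in> borel_measurable borel"
proof -
  from adm obtain k where "\<forall>x. x \<noteq> 0 \<longrightarrow> K x = k (norm x)" "\<forall>s t. 0 < s \<longrightarrow> s \<le> t \<longrightarrow> k t \<le> k s"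
    unfolding admissible_def by blast
  then show ?thesis by (rule K_borel)
qed

lemma K_sym: "K (x - y) = K (y - x)"
proof (cases "x = y")
  case False
  from adm obtain k where "\<forall>x. x \<noteq> 0 \<longrightarrow> K x = k (norm x)"
    unfolding admissible_def by blast
  then show ?thesis using False by (simp add: norm_minus_commute)
qed simp

lemma diff_meas[measurable]: "(\<lambda>y. x - y) \<in> borel_measurable (lebesgue_on \<Omega>)"
  by (rule continuous_imp_measurable_on_sets_lebesgue) (auto intro!: continuous_intros)

lemma Kx_meas[measurable]: "(\<lambda>y. K (x - y)) \<in> borel_measurable (lebesgue_on \<Omega>)"
  using measurable_compose[OF diff_meas K_borel] by (simp add: o_def)

lemma kernel_nn_bound: "\<exists>Mk\<ge>0. \<forall>x\<in>\<Omega>. (\<integral>\<^sup>+ y. ennreal \<bar>K (x - y)\<bar> \<partial>lebesgue_on \<Omega>) \<le> ennreal Mk"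
proof -
  obtain R where R: "R > 0" "\<Omega> \<subseteq> ball 0 R"
    using bd by (meson bounded_subset_ballD)
  define D where "D = 2 * R"
  have D: "D > 0" using R by (simp add: D_def)
  obtain C1 C2 where C: "0 \<le> C1" "0 \<le> C2"
    "\<forall>z. z \<noteq> 0 \<and> norm z < D \<longrightarrow> \<bar>K z\<bar> \<le> C1 * norm z powr (1 - real DIM('a)) + C2"
    using K_pointwise_bound[OF adm D] by blast
  define g where "g z = indicator (ball (0::'a) D) z * ennreal (C1 * norm z powr (1 - real DIM('a)) + C2)" for z
  have [measurable]: "ball (0::'a) D \<in> sets borel" by simp
  have pm[measurable]: "(\<lambda>z::'a. norm z powr (1 - real DIM('a))) \<in> borel_measurable borel"
    by (intro powr_real_measurable) auto
  have g_meas[measurable]: "g \<in> borel_measurable borel" unfolding g_def by measurable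
  have gfin: "integral\<^sup>N lborel g < \<infinity>"
  proof -
    have "integral\<^sup>N lborel g = (\<integral>\<^sup>+ z. ennreal C1 * (indicator (ball (0::'a) D) z * ennreal (norm z powr (1 - real DIM('a))))
                 + ennreal C2 * indicator (ball (0::'a) D) z \<partial>lborel)"
      unfolding g_def using C
      by (intro nn_integral_cong) (auto simp: indicator_def ennreal_plus[symmetric] ennreal_mult[symmetric] simp del: ennreal_plus)
    also have "\<dots> = ennreal C1 * (\<integral>\<^sup>+ z. indicator (ball (0::'a) D) z * ennreal (norm z powr (1 - real DIM('a))) \<partial>lborel)
                 + ennreal C2 * emeasure lborel (ball (0::'a) D)"
      by (subst nn_integral_add) (auto simp: nn_integral_cmult nn_integral_cmult_indicator)
    also have "\<dots> < \<infinity>"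
      using shell_integral[OF D, where 'a='a] emeasure_lborel_ball_finite[of "0::'a" D]
      by (simp add: ennreal_mult_less_top ennreal_mult_eq_top_iff)
    finally show ?thesis .
  qed
  define Mk where "Mk = enn2real (integral\<^sup>N lborel g)"
  have Mk_eq: "integral\<^sup>N lborel g = ennreal Mk" using gfin by (simp add: Mk_def less_top)
  show ?thesis
  proof (intro exI[of _ Mk] conjI ballI)
    show "0 \<le> Mk" by (simp add: Mk_def)
    fix x assume x: "x \<in> \<Omega>"
    have "(\<integral>\<^sup>+ y. ennreal \<bar>K (x - y)\<bar> \<partial>lebesgue_on \<Omega>) = (\<integral>\<^sup>+ y. ennreal \<bar>K (x - y)\<bar> * indicator \<Omega> y \<partial>lebesgue)"
      by (rule nn_integral_restrict_space) simp
    also have "\<dots> = (\<integral>\<^sup>+ y. ennreal \<bar>K (x - y)\<bar> * indicator \<Omega> y \<partial>lborel)"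
      by (simp add: nn_integral_completion)
    also have "\<dots> \<le> (\<integral>\<^sup>+ y. g ((- x) + y) \<partial>lborel)"
    proof (rule nn_integral_mono_AE)
      show "AE y in lborel. ennreal \<bar>K (x - y)\<bar> * indicator \<Omega> y \<le> g ((- x) + y)"
        using AE_lborel_singleton[of x]
      proof eventually_elim
        case (elim y)
        show ?case
        proof (cases "y \<in> \<Omega>")
          case True
          have "norm (x - y) < D" using R x True unfolding D_def
            by (smt (verit) mem_ball_0 norm_triangle_ineq4 subset_iff)
          moreover have "x - y \<noteq> 0" using elim by simp
          ultimately have "\<bar>K (x - y)\<bar> \<le> C1 * norm (x - y) powr (1 - real DIM('a)) + C2" using C by blast
          moreover have "norm (-x + y) = norm (x - y)" by (simp add: norm_minus_commute)
          ultimately show ?thesis using True \<open>norm (x - y) < D\<close>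
            by (simp add: g_def indicator_def ennreal_leI)
        qed (simp add: indicator_def)
      qed
    qed
    also have "\<dots> = (\<integral>\<^sup>+ z. g z \<partial>distr lborel borel ((+) (-x)))"
      by (subst nn_integral_distr) auto
    also have "\<dots> = integral\<^sup>N lborel g" by (simp add: lborel_distr_plus)
    finally show "(\<integral>\<^sup>+ y. ennreal \<bar>K (x - y)\<bar> \<partial>lebesgue_on \<Omega>) \<le> ennreal Mk" using Mk_eq by simp
  qed
qed

end


context kset begin

abbreviation "mu \<equiv> lebesgue_on \<Omega>"

lemma Om_lmeas: "\<Omega> \<in> lmeasurable"
  using bd by (simp add: bounded_set_imp_lmeasurable)

lemma fin_mu: "finite_measure mu"
proof (rule finite_measureI)
  have "emeasure mu (space mu) = emeasure lebesgue \<Omega>"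
    by (simp add: emeasure_restrict_space)
  also have "\<dots> < \<infinity>" using Om_lmeas by (simp add: fmeasurable_def)
  finally show "emeasure mu (space mu) \<noteq> \<infinity>" by simp
qed

interpretation mu: finite_measure mu by (rule fin_mu)
interpretation mumu: pair_sigma_finite mu mu ..

lemma fin_mu': "finite_measure (lebesgue_on \<Omega>)" by (rule fin_mu)

definition Mk where "Mk = (SOME Mk. Mk \<ge> 0 \<and> (\<forall>x\<in>\<Omega>. (\<integral>\<^sup>+ y. ennreal \<bar>K (x - y)\<bar> \<partial>mu) \<le> ennreal Mk))"

lemma Mk: "0 \<le> Mk" "x \<in> \<Omega> \<Longrightarrow> (\<integral>\<^sup>+ y. ennreal \<bar>K (x - y)\<bar> \<partial>mu) \<le> ennreal Mk"
  using someI_ex[OF kernel_nn_bound] unfolding Mk_def by auto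

lemma conv_nn:
  assumes g: "g \<in> borel_measurable mu" and gb: "\<forall>y\<in>\<Omega>. \<bar>g y\<bar> \<le> G" and G: "0 \<le> G" and x: "x \<in> \<Omega>"
  shows "(\<integral>\<^sup>+ y. ennreal (norm (K (x - y) * g y)) \<partial>mu) \<le> ennreal (G * Mk)"
proof -
  have "(\<integral>\<^sup>+ y. ennreal (norm (K (x - y) * g y)) \<partial>mu) \<le> (\<integral>\<^sup>+ y. ennreal G * ennreal \<bar>K (x - y)\<bar> \<partial>mu)"
  proof (rule nn_integral_mono)
    fix y assume "y \<in> space mu"
    hence "\<bar>g y\<bar> \<le> G" using gb by simp
    hence "\<bar>K (x - y)\<bar> * \<bar>g y\<bar> \<le> G * \<bar>K (x - y)\<bar>" by (simp add: mult.commute mult_right_mono)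
    thus "ennreal (norm (K (x - y) * g y)) \<le> ennreal G * ennreal \<bar>K (x - y)\<bar>"
      using G by (simp add: abs_mult ennreal_mult[symmetric] ennreal_leI)
  qed
  also have "\<dots> = ennreal G * (\<integral>\<^sup>+ y. ennreal \<bar>K (x - y)\<bar> \<partial>mu)"
    by (rule nn_integral_cmult) simp
  also have "\<dots> \<le> ennreal G * ennreal Mk" using Mk(2)[OF x] by (rule mult_left_mono) simp
  also have "\<dots> = ennreal (G * Mk)" using G by (simp add: ennreal_mult')
  finally show ?thesis .
qed

lemma conv_integrable:
  assumes g: "g \<in> borel_measurable mu" and gb: "\<forall>y\<in>\<Omega>. \<bar>g y\<bar> \<le> G" and x: "x \<in> \<Omega>"
  shows "integrable mu (\<lambda>y. K (x - y) * g y)"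
proof (rule integrableI_bounded)
  show "(\<lambda>y. K (x - y) * g y) \<in> borel_measurable mu" using g by measurable
  have G: "0 \<le> max G 0" by simp
  have gb': "\<forall>y\<in>\<Omega>. \<bar>g y\<bar> \<le> max G 0" using gb by force
  show "(\<integral>\<^sup>+ y. ennreal (norm (K (x - y) * g y)) \<partial>mu) < \<infinity>"
    using conv_nn[OF g gb' G x] by (simp add: le_less_trans)
qed

lemma conv_bound:
  assumes g: "g \<in> borel_measurable mu" and gb: "\<forall>y\<in>\<Omega>. \<bar>g y\<bar> \<le> G" and G: "0 \<le> G" and x: "x \<in> \<Omega>"
  shows "\<bar>conv \<Omega> K g x\<bar> \<le> G * Mk"
proof -
  have "ennreal \<bar>conv \<Omega> K g x\<bar> = ennreal (norm (\<integral>y. K (x - y) * g y \<partial>mu))" by (simp add: conv_def)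
  also have "\<dots> \<le> (\<integral>\<^sup>+ y. ennreal (norm (K (x - y) * g y)) \<partial>mu)"
    by (rule integral_norm_bound_ennreal) (rule conv_integrable[OF g gb x])
  also have "\<dots> \<le> ennreal (G * Mk)" by (rule conv_nn[OF g gb G x])
  finally show ?thesis using G Mk(1) by (simp add: ennreal_le_iff)
qed

lemma prod_meas:
  assumes g[measurable]: "g \<in> borel_measurable mu"
  shows "(\<lambda>(x, y). K (x - y) * g y) \<in> borel_measurable (mu \<Otimes>\<^sub>M mu)"
proof -
  have "(\<lambda>p::'a\<times>'a. fst p - snd p) \<in> borel_measurable (mu \<Otimes>\<^sub>M mu)"
    by (intro borel_measurable_diff measurable_compose[OF measurable_fst id_borel_measurable_lebesgue_on[unfolded id_def]]
        measurable_compose[OF measurable_snd id_borel_measurable_lebesgue_on[unfolded id_def]])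
  hence "(\<lambda>p::'a\<times>'a. K (fst p - snd p)) \<in> borel_measurable (mu \<Otimes>\<^sub>M mu)"
    using measurable_compose[OF _ K_borel] by (simp add: o_def)
  moreover have "(\<lambda>p::'a\<times>'a. g (snd p)) \<in> borel_measurable (mu \<Otimes>\<^sub>M mu)"
    by measurable
  ultimately have "(\<lambda>p::'a\<times>'a. K (fst p - snd p) * g (snd p)) \<in> borel_measurable (mu \<Otimes>\<^sub>M mu)"
    by (rule borel_measurable_times)
  thus ?thesis by (simp add: case_prod_beta')
qed

lemma conv_meas:
  assumes g: "g \<in> borel_measurable mu"
  shows "conv \<Omega> K g \<in> borel_measurable mu"
  unfolding conv_def by (rule mu.borel_measurable_lebesgue_integral) (rule prod_meas[OF g])

end


context kset begin

interpretation mu: finite_measure mu by (rule fin_mu)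
interpretation mumu: pair_sigma_finite mu mu ..

lemma bounded_integrable:
  fixes f :: "'a \<Rightarrow> real"
  assumes "f \<in> borel_measurable mu" "\<forall>y\<in>\<Omega>. \<bar>f y\<bar> \<le> F"
  shows "integrable mu f"
  by (rule mu.integrable_const_bound[where B=F]) (use assms in auto)

lemma conv_sym:
  assumes f[measurable]: "f \<in> borel_measurable mu" and fb: "\<forall>y\<in>\<Omega>. \<bar>f y\<bar> \<le> F"
    and g[measurable]: "g \<in> borel_measurable mu" and gb: "\<forall>y\<in>\<Omega>. \<bar>g y\<bar> \<le> G"
    and F: "0 \<le> F" and G: "0 \<le> G"
  shows "(\<integral>x. f x * conv \<Omega> K g x \<partial>mu) = (\<integral>y. g y * conv \<Omega> K f y \<partial>mu)"
proof -
  define h where "h = (\<lambda>x y. f x * (K (x - y) * g y))"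
  have pm: "(\<lambda>(x, y). K (x - y) * g y) \<in> borel_measurable (mu \<Otimes>\<^sub>M mu)" by (rule prod_meas[OF g])
  have hm[measurable]: "case_prod h \<in> borel_measurable (mu \<Otimes>\<^sub>M mu)"
  proof -
    have "(\<lambda>p. f (fst p)) \<in> borel_measurable (mu \<Otimes>\<^sub>M mu)" by measurable
    from borel_measurable_times[OF this pm] show ?thesis
      by (simp add: h_def case_prod_beta')
  qed
  have int: "integrable (mu \<Otimes>\<^sub>M mu) (case_prod h)"
  proof (rule mumu.Fubini_integrable)
    show "case_prod h \<in> borel_measurable (mu \<Otimes>\<^sub>M mu)" by (rule hm)
    have nm: "(\<lambda>p. norm (case_prod h p)) \<in> borel_measurable (mu \<Otimes>\<^sub>M mu)" by measurable
    have m1: "(\<lambda>x. \<integral>y. norm (case_prod h (x, y)) \<partial>mu) \<in> borel_measurable mu"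
      using mu.borel_measurable_lebesgue_integral[of "\<lambda>x y. norm (case_prod h (x, y))" mu] nm
      by (simp add: case_prod_beta')
    show "integrable mu (\<lambda>x. \<integral>y. norm (case_prod h (x, y)) \<partial>mu)"
    proof (rule mu.integrable_const_bound[where B="F * (G * Mk)"])
      show "AE x in mu. norm (\<integral>y. norm (case_prod h (x, y)) \<partial>mu) \<le> F * (G * Mk)"
      proof (rule AE_I2)
        fix x assume x: "x \<in> space mu"
        hence x': "x \<in> \<Omega>" by simp
        have ci: "integrable mu (\<lambda>y. K (x - y) * g y)" by (rule conv_integrable[OF g gb x'])
        have "(\<integral>y. norm (case_prod h (x, y)) \<partial>mu) = \<bar>f x\<bar> * (\<integral>y. norm (K (x - y) * g y) \<partial>mu)"
          by (simp add: h_def abs_mult)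
        also have "(\<integral>y. norm (K (x - y) * g y) \<partial>mu) \<le> G * Mk"
        proof -
          have "ennreal (norm (\<integral>y. norm (K (x - y) * g y) \<partial>mu)) \<le> (\<integral>\<^sup>+ y. ennreal (norm (norm (K (x - y) * g y))) \<partial>mu)"
            by (rule integral_norm_bound_ennreal) (use ci in simp)
          also have "\<dots> \<le> ennreal (G * Mk)" using conv_nn[OF g gb G x'] by simp
          finally show ?thesis using G Mk(1) by (simp add: ennreal_le_iff)
        qed
        hence "\<bar>f x\<bar> * (\<integral>y. norm (K (x - y) * g y) \<partial>mu) \<le> F * (G * Mk)"
          using fb x' F by (intro mult_mono) auto
        finally show "norm (\<integral>y. norm (case_prod h (x, y)) \<partial>mu) \<le> F * (G * Mk)" by simp
      qed
    qed (rule m1)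
    show "AE x in mu. integrable mu (\<lambda>y. case_prod h (x, y))"
    proof (rule AE_I2)
      fix x assume "x \<in> space mu"
      hence x': "x \<in> \<Omega>" by simp
      show "integrable mu (\<lambda>y. case_prod h (x, y))"
        using conv_integrable[OF g gb x'] by (simp add: h_def)
    qed
  qed
  have "(\<integral>y. (\<integral>x. h x y \<partial>mu) \<partial>mu) = (\<integral>x. (\<integral>y. h x y \<partial>mu) \<partial>mu)"
    by (rule mumu.Fubini_integral) (rule int)
  moreover have "(\<integral>x. h x y \<partial>mu) = g y * conv \<Omega> K f y" for y
  proof -
    have "(\<integral>x. h x y \<partial>mu) = (\<integral>x. g y * (K (y - x) * f x) \<partial>mu)"
      by (rule Bochner_Integration.integral_cong) (auto simp: h_def K_sym[of _ y])
    thus ?thesis by (simp add: conv_def)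
  qed
  moreover have "(\<integral>y. h x y \<partial>mu) = f x * conv \<Omega> K g x" for x
    by (simp add: h_def conv_def)
  ultimately show ?thesis by simp
qed

lemma conv_lin:
  assumes g1: "g1 \<in> borel_measurable mu" "\<forall>y\<in>\<Omega>. \<bar>g1 y\<bar> \<le> G1"
    and g2: "g2 \<in> borel_measurable mu" "\<forall>y\<in>\<Omega>. \<bar>g2 y\<bar> \<le> G2" and x: "x \<in> \<Omega>"
  shows "conv \<Omega> K (\<lambda>y. g1 y + c * g2 y) x = conv \<Omega> K g1 x + c * conv \<Omega> K g2 x"
proof -
  have i1: "integrable mu (\<lambda>y. K (x - y) * g1 y)" by (rule conv_integrable[OF g1 x])
  have i2: "integrable mu (\<lambda>y. c * (K (x - y) * g2 y))"
    using conv_integrable[OF g2 x] by simp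
  have "conv \<Omega> K (\<lambda>y. g1 y + c * g2 y) x = (\<integral>y. K (x - y) * g1 y + c * (K (x - y) * g2 y) \<partial>mu)"
    unfolding conv_def by (rule Bochner_Integration.integral_cong) (auto simp: algebra_simps)
  also have "\<dots> = conv \<Omega> K g1 x + c * conv \<Omega> K g2 x"
    using i1 i2 by (simp add: conv_def)
  finally show ?thesis .
qed

lemma conv_cong_AE:
  assumes "g1 \<in> borel_measurable mu" "g2 \<in> borel_measurable mu" "AE y in mu. g1 y = g2 y"
  shows "conv \<Omega> K g1 x = conv \<Omega> K g2 x"
  unfolding conv_def by (rule integral_cong_AE) (use assms in auto)

end


definition hfun :: "real \<Rightarrow> real \<Rightarrow> real" where
  "hfun s u = s * ln s + u * ln u + (1 - (s + u)) * ln (1 - (s + u))"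

lemma xlnx_bound: "0 \<le> (s::real) \<Longrightarrow> s \<le> 1 \<Longrightarrow> \<bar>s * ln s\<bar> \<le> 1"
proof (cases "s = 0")
  case False
  assume s: "0 \<le> s" "s \<le> 1"
  hence s0: "0 < s" using False by (simp add: less_le)
  have "ln s \<le> 0" using s s0 by simp
  hence a: "s * ln s \<le> 0" using s0 by (simp add: mult_nonneg_nonpos)
  have "ln (1/s) \<le> 1/s - 1" using s0 by (intro ln_le_minus_one) simp
  hence "- ln s \<le> 1/s - 1" using s0 by (simp add: ln_div)
  hence "s * (- ln s) \<le> s * (1/s - 1)" using s0 by (intro mult_left_mono) auto
  hence "- (s * ln s) \<le> 1 - s" using s0 by (simp add: algebra_simps)
  thus ?thesis using a s by linarith
qed simp

lemma hfun_bound: "0 \<le> (s::real) \<Longrightarrow> 0 \<le> u \<Longrightarrow> s + u \<le> 1 \<Longrightarrow> \<bar>hfun s u\<bar> \<le> 3"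
proof -
  assume a: "0 \<le> s" "0 \<le> u" "s + u \<le> 1"
  have "\<bar>s * ln s\<bar> \<le> 1" "\<bar>u * ln u\<bar> \<le> 1" "\<bar>(1 - (s + u)) * ln (1 - (s + u))\<bar> \<le> 1"
    using a by (auto intro!: xlnx_bound)
  thus ?thesis unfolding hfun_def by linarith
qed

locale core = kset +
  fixes r b :: "'a \<Rightarrow> real" and \<epsilon> c11 c22 mr mb :: real
  assumes rm[measurable]: "r \<in> borel_measurable (lebesgue_on \<Omega>)"
    and bm[measurable]: "b \<in> borel_measurable (lebesgue_on \<Omega>)"
    and rb: "\<forall>x\<in>\<Omega>. 0 \<le> r x \<and> 0 \<le> b x \<and> r x + b x \<le> 1"
    and rint: "(\<integral>x. r x \<partial>lebesgue_on \<Omega>) = mr"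
    and bint: "(\<integral>x. b x \<partial>lebesgue_on \<Omega>) = mb"
    and eps: "\<epsilon> > 0" and mr: "mr > 0" and mb: "mb > 0"
    and mass: "mr + mb < measure lebesgue \<Omega>"
    and minim: "\<forall>(r', b') \<in> admissible_set \<Omega> mr mb.
           F_eps \<epsilon> \<Omega> K c11 c22 r b \<le> F_eps \<epsilon> \<Omega> K c11 c22 r' b'"
begin

interpretation mu: finite_measure mu by (rule fin_mu)

abbreviation "A \<equiv> conv \<Omega> K r"
abbreviation "B \<equiv> conv \<Omega> K b"
definition "P x = 2 * (c11 * A x - B x)"

lemma r_bd: "\<forall>y\<in>\<Omega>. \<bar>r y\<bar> \<le> 1" and b_bd: "\<forall>y\<in>\<Omega>. \<bar>b y\<bar> \<le> 1"
  using rb by force+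

lemma A_meas[measurable]: "A \<in> borel_measurable mu" by (rule conv_meas[OF rm])
lemma B_meas[measurable]: "B \<in> borel_measurable mu" by (rule conv_meas[OF bm])
lemma A_bd: "\<forall>x\<in>\<Omega>. \<bar>A x\<bar> \<le> Mk" using conv_bound[OF rm r_bd] by simp
lemma B_bd: "\<forall>x\<in>\<Omega>. \<bar>B x\<bar> \<le> Mk" using conv_bound[OF bm b_bd] by simp
lemma P_meas[measurable]: "P \<in> borel_measurable mu" unfolding P_def by measurable

definition "PB = 2 * (\<bar>c11\<bar> * Mk + Mk)"
lemma P_bd: "\<forall>x\<in>\<Omega>. \<bar>P x\<bar> \<le> PB"
proof
  fix x assume x: "x \<in> \<Omega>"
  have "\<bar>c11 * A x\<bar> \<le> \<bar>c11\<bar> * Mk" using A_bd x by (simp add: abs_mult mult_left_mono)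
  moreover have "\<bar>B x\<bar> \<le> Mk" using B_bd x by auto
  ultimately show "\<bar>P x\<bar> \<le> PB" unfolding P_def PB_def by (smt (verit))
qed

lemma hfun_meas[measurable]:
  assumes [measurable]: "f \<in> borel_measurable mu" "g \<in> borel_measurable mu"
  shows "(\<lambda>x. hfun (f x) (g x)) \<in> borel_measurable mu"
  unfolding hfun_def by measurable

lemma F_E_eq: "F_E \<Omega> f g = (\<integral>x. hfun (f x) (g x) \<partial>mu)"
  by (simp add: F_E_def hfun_def)

lemma hfun_integrable:
  assumes "f \<in> borel_measurable mu" "g \<in> borel_measurable mu"
    and "\<forall>x\<in>\<Omega>. 0 \<le> f x \<and> 0 \<le> g x \<and> f x + g x \<le> 1"
  shows "integrable mu (\<lambda>x. hfun (f x) (g x))"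
  by (rule bounded_integrable[where F=3]) (use assms hfun_bound in auto)

end


context kset begin

definition bmf where "bmf (f::'a \<Rightarrow> real) \<longleftrightarrow> f \<in> borel_measurable mu \<and> (\<exists>F. \<forall>x\<in>\<Omega>. \<bar>f x\<bar> \<le> F)"

lemma bmfI: "f \<in> borel_measurable mu \<Longrightarrow> (\<forall>x\<in>\<Omega>. \<bar>f x\<bar> \<le> F) \<Longrightarrow> bmf f"
  unfolding bmf_def by blast

lemma bmfE: assumes "bmf f" obtains F where "0 \<le> F" "\<forall>x\<in>\<Omega>. \<bar>f x\<bar> \<le> F" "f \<in> borel_measurable mu"
proof -
  from assms obtain F where "\<forall>x\<in>\<Omega>. \<bar>f x\<bar> \<le> F" "f \<in> borel_measurable mu" unfolding bmf_def by blast
  then show ?thesis using that[of "max F 0"] by force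
qed

lemma bmf_meas: "bmf f \<Longrightarrow> f \<in> borel_measurable mu" unfolding bmf_def by blast

lemma bmf_const: "bmf (\<lambda>x. c)" by (rule bmfI[where F="\<bar>c\<bar>"]) simp_all

lemma bmf_add: assumes "bmf f" "bmf g" shows "bmf (\<lambda>x. f x + g x)"
proof -
  obtain F G where b: "\<forall>x\<in>\<Omega>. \<bar>f x\<bar> \<le> F" "\<forall>x\<in>\<Omega>. \<bar>g x\<bar> \<le> G"
    and m: "f \<in> borel_measurable mu" "g \<in> borel_measurable mu"
    using assms unfolding bmf_def by blast
  show ?thesis
  proof (rule bmfI[where F="F+G"])
    show "(\<lambda>x. f x + g x) \<in> borel_measurable mu" using m by (rule borel_measurable_add)
    show "\<forall>x\<in>\<Omega>. \<bar>f x + g x\<bar> \<le> F + G"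
    proof
      fix x assume "x \<in> \<Omega>"
      hence "\<bar>f x\<bar> \<le> F" "\<bar>g x\<bar> \<le> G" using b by auto
      thus "\<bar>f x + g x\<bar> \<le> F + G" by linarith
    qed
  qed
qed

lemma bmf_diff: assumes "bmf f" "bmf g" shows "bmf (\<lambda>x. f x - g x)"
proof -
  obtain F G where b: "\<forall>x\<in>\<Omega>. \<bar>f x\<bar> \<le> F" "\<forall>x\<in>\<Omega>. \<bar>g x\<bar> \<le> G"
    and m: "f \<in> borel_measurable mu" "g \<in> borel_measurable mu"
    using assms unfolding bmf_def by blast
  show ?thesis
  proof (rule bmfI[where F="F+G"])
    show "(\<lambda>x. f x - g x) \<in> borel_measurable mu" using m by (rule borel_measurable_diff)
    show "\<forall>x\<in>\<Omega>. \<bar>f x - g x\<bar> \<le> F + G"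
    proof
      fix x assume "x \<in> \<Omega>"
      hence "\<bar>f x\<bar> \<le> F" "\<bar>g x\<bar> \<le> G" using b by auto
      thus "\<bar>f x - g x\<bar> \<le> F + G" by linarith
    qed
  qed
qed

lemma bmf_mult: assumes "bmf f" "bmf g" shows "bmf (\<lambda>x. f x * g x)"
proof -
  obtain F where F: "0 \<le> F" "\<forall>x\<in>\<Omega>. \<bar>f x\<bar> \<le> F" "f \<in> borel_measurable mu"
    using assms(1) by (rule bmfE)
  obtain G where G: "0 \<le> G" "\<forall>x\<in>\<Omega>. \<bar>g x\<bar> \<le> G" "g \<in> borel_measurable mu"
    using assms(2) by (rule bmfE)
  show ?thesis
  proof (rule bmfI[where F="F*G"])
    show "(\<lambda>x. f x * g x) \<in> borel_measurable mu" using F(3) G(3) by (rule borel_measurable_times)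
    show "\<forall>x\<in>\<Omega>. \<bar>f x * g x\<bar> \<le> F * G"
    proof
      fix x assume "x \<in> \<Omega>"
      hence "\<bar>f x\<bar> \<le> F" "\<bar>g x\<bar> \<le> G" using F G by auto
      thus "\<bar>f x * g x\<bar> \<le> F * G" unfolding abs_mult using F(1) by (intro mult_mono) auto
    qed
  qed
qed

lemma bmf_integrable: "bmf f \<Longrightarrow> integrable mu f"
  unfolding bmf_def using bounded_integrable by blast

lemma bmf_conv: assumes "bmf g" shows "bmf (conv \<Omega> K g)"
proof -
  obtain G where "0 \<le> G" "\<forall>x\<in>\<Omega>. \<bar>g x\<bar> \<le> G" "g \<in> borel_measurable mu" using assms by (metis bmfE)
  then show ?thesis using conv_bound[of g G] by (intro bmfI[where F="G*Mk"] conv_meas) auto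
qed

lemma conv_sym': "bmf f \<Longrightarrow> bmf g \<Longrightarrow> (\<integral>x. f x * conv \<Omega> K g x \<partial>mu) = (\<integral>y. g y * conv \<Omega> K f y \<partial>mu)"
proof -
  assume "bmf f" "bmf g"
  then obtain F G where h: "0 \<le> F" "\<forall>x\<in>\<Omega>. \<bar>f x\<bar> \<le> F" "f \<in> borel_measurable mu"
    "0 \<le> G" "\<forall>x\<in>\<Omega>. \<bar>g x\<bar> \<le> G" "g \<in> borel_measurable mu" by (metis bmfE)
  show ?thesis by (rule conv_sym[OF h(3) h(2) h(6) h(5) h(1) h(4)])
qed

lemma conv_lin': "bmf g1 \<Longrightarrow> bmf g2 \<Longrightarrow> x \<in> \<Omega> \<Longrightarrow> conv \<Omega> K (\<lambda>y. g1 y + c * g2 y) x = conv \<Omega> K g1 x + c * conv \<Omega> K g2 x"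
proof -
  assume "bmf g1" "bmf g2" "x \<in> \<Omega>"
  then obtain F G where "\<forall>x\<in>\<Omega>. \<bar>g1 x\<bar> \<le> F" "g1 \<in> borel_measurable mu"
    "\<forall>x\<in>\<Omega>. \<bar>g2 x\<bar> \<le> G" "g2 \<in> borel_measurable mu" unfolding bmf_def by blast
  then show ?thesis using \<open>x \<in> \<Omega>\<close> by (intro conv_lin) auto
qed

end



context core begin

interpretation mu: finite_measure mu by (rule fin_mu)

lemma bmf_r: "bmf r" by (rule bmfI[OF rm r_bd])
lemma bmf_b: "bmf b" by (rule bmfI[OF bm b_bd])
lemma bmf_A: "bmf A" by (rule bmf_conv[OF bmf_r])
lemma bmf_B: "bmf B" by (rule bmf_conv[OF bmf_b])
lemma bmf_P: "bmf P" unfolding P_def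
  by (intro bmf_mult bmf_const bmf_diff bmf_A bmf_B)

lemma MI:
  assumes psm[measurable]: "\<psi> \<in> borel_measurable mu" and psb: "\<forall>x\<in>\<Omega>. \<bar>\<psi> x\<bar> \<le> \<Lambda>" and L0: "0 \<le> \<Lambda>"
    and ps0: "(\<integral>x. \<psi> x \<partial>mu) = 0" and t: "t > 0"
    and adm': "\<forall>x\<in>\<Omega>. 0 \<le> r x + t * \<psi> x \<and> r x + t * \<psi> x + b x \<le> 1"
  shows "0 \<le> (\<integral>x. \<epsilon> * (hfun (r x + t * \<psi> x) (b x) - hfun (r x) (b x)) + t * (\<psi> x * P x) \<partial>mu)
             + t^2 * (\<bar>c11\<bar> * (\<Lambda> * (\<Lambda> * Mk)) * measure mu \<Omega>)"
proof -
  define r' where "r' x = r x + t * \<psi> x" for x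
  have bps: "bmf \<psi>" by (rule bmfI[OF psm psb])
  have br': "bmf r'" unfolding r'_def by (intro bmf_add bmf_mult bmf_const bmf_r bps)
  have r'm[measurable]: "r' \<in> borel_measurable mu" unfolding r'_def by measurable
  have rb': "\<forall>x\<in>\<Omega>. 0 \<le> r' x \<and> 0 \<le> b x \<and> r' x + b x \<le> 1" using adm' rb by (auto simp: r'_def)
  have "(r', b) \<in> admissible_set \<Omega> mr mb"
  proof -
    have "(\<integral>x. r' x \<partial>mu) = (\<integral>x. r x \<partial>mu) + (\<integral>x. t * \<psi> x \<partial>mu)"
      unfolding r'_def using bmf_integrable[OF bmf_r] bmf_integrable[OF bps] by simp
    also have "\<dots> = mr" using rint ps0 by simp
    finally have "(\<integral>x. r' x \<partial>mu) = mr" .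
    moreover have "AE x in mu. 0 \<le> r' x \<and> 0 \<le> b x \<and> r' x + b x \<le> 1"
      using rb' by (intro AE_I2) auto
    ultimately show ?thesis unfolding admissible_set_def
      using bmf_integrable[OF br'] bmf_integrable[OF bmf_b] bint by auto
  qed
  hence min: "F_eps \<epsilon> \<Omega> K c11 c22 r b \<le> F_eps \<epsilon> \<Omega> K c11 c22 r' b" using minim by auto
  define Ap where "Ap = conv \<Omega> K \<psi>"
  have bAp: "bmf Ap" unfolding Ap_def by (rule bmf_conv[OF bps])
  have Apb: "\<forall>x\<in>\<Omega>. \<bar>Ap x\<bar> \<le> \<Lambda> * Mk" unfolding Ap_def using conv_bound[OF psm psb L0] by auto
  have A': "conv \<Omega> K r' x = A x + t * Ap x" if "x \<in> \<Omega>" for x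
    unfolding r'_def Ap_def by (rule conv_lin'[OF bmf_r bps that])
  define Ir where "Ir x = c11 * r x * A x - r x * B x - b x * A x + c22 * b x * B x" for x
  define X where "X x = \<psi> x * P x + c11 * (r x * Ap x - \<psi> x * A x) + (\<psi> x * B x - b x * Ap x)" for x
  define Y where "Y x = c11 * (\<psi> x * Ap x)" for x
  have bIr: "bmf Ir" unfolding Ir_def
    by (intro bmf_add bmf_diff bmf_mult bmf_const bmf_r bmf_b bmf_A bmf_B)
  have bX: "bmf X" unfolding X_def
    by (intro bmf_add bmf_diff bmf_mult bmf_const bmf_r bmf_b bmf_A bmf_B bmf_P bps bAp)
  have bY: "bmf Y" unfolding Y_def
    by (intro bmf_mult bmf_const bps bAp)
  have F0r: "F_0 \<Omega> K c11 c22 r b = (\<integral>x. Ir x \<partial>mu)" by (simp add: F_0_def Ir_def)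
  have "F_0 \<Omega> K c11 c22 r' b = (\<integral>x. Ir x + t * X x + t^2 * Y x \<partial>mu)"
    unfolding F_0_def
  proof (rule Bochner_Integration.integral_cong[OF refl])
    fix x assume "x \<in> space mu"
    hence x: "x \<in> \<Omega>" by simp
    show "c11 * r' x * conv \<Omega> K r' x - r' x * conv \<Omega> K b x - b x * conv \<Omega> K r' x + c22 * b x * conv \<Omega> K b x
          = Ir x + t * X x + t^2 * Y x"
      unfolding A'[OF x] by (simp add: r'_def Ir_def X_def Y_def P_def power2_eq_square algebra_simps)
  qed
  also have "\<dots> = (\<integral>x. Ir x \<partial>mu) + t * (\<integral>x. X x \<partial>mu) + t^2 * (\<integral>x. Y x \<partial>mu)"
    using bmf_integrable[OF bIr] bmf_integrable[OF bX] bmf_integrable[OF bY] by simp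
  finally have F0r': "F_0 \<Omega> K c11 c22 r' b = F_0 \<Omega> K c11 c22 r b + t * (\<integral>x. X x \<partial>mu) + t^2 * (\<integral>x. Y x \<partial>mu)"
    using F0r by simp
  have symA: "(\<integral>x. r x * Ap x \<partial>mu) = (\<integral>x. \<psi> x * A x \<partial>mu)"
    unfolding Ap_def by (rule conv_sym'[OF bmf_r bps])
  have symB: "(\<integral>x. \<psi> x * B x \<partial>mu) = (\<integral>x. b x * Ap x \<partial>mu)"
    unfolding Ap_def by (rule conv_sym'[OF bps bmf_b])
  have iX: "(\<integral>x. X x \<partial>mu) = (\<integral>x. \<psi> x * P x \<partial>mu)"
  proof -
    have i1: "integrable mu (\<lambda>x. \<psi> x * P x)" by (intro bmf_integrable bmf_mult bps bmf_P)
    have i2: "integrable mu (\<lambda>x. r x * Ap x)" by (intro bmf_integrable bmf_mult bmf_r bAp)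
    have i3: "integrable mu (\<lambda>x. \<psi> x * A x)" by (intro bmf_integrable bmf_mult bps bmf_A)
    have i4: "integrable mu (\<lambda>x. \<psi> x * B x)" by (intro bmf_integrable bmf_mult bps bmf_B)
    have i5: "integrable mu (\<lambda>x. b x * Ap x)" by (intro bmf_integrable bmf_mult bmf_b bAp)
    have "(\<integral>x. X x \<partial>mu) = (\<integral>x. \<psi> x * P x \<partial>mu) + c11 * ((\<integral>x. r x * Ap x \<partial>mu) - (\<integral>x. \<psi> x * A x \<partial>mu))
           + ((\<integral>x. \<psi> x * B x \<partial>mu) - (\<integral>x. b x * Ap x \<partial>mu))"
      unfolding X_def using i1 i2 i3 i4 i5 by simp
    thus ?thesis using symA symB by simp
  qed
  have iY: "(\<integral>x. Y x \<partial>mu) \<le> \<bar>c11\<bar> * (\<Lambda> * (\<Lambda> * Mk)) * measure mu \<Omega>"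
  proof -
    have "(\<integral>x. Y x \<partial>mu) \<le> (\<integral>x. \<bar>c11\<bar> * (\<Lambda> * (\<Lambda> * Mk)) \<partial>mu)"
    proof -
      have "(\<integral>x. Y x \<partial>mu) \<le> (\<integral>x. \<bar>c11\<bar> * (\<Lambda> * (\<Lambda> * Mk)) \<partial>mu)"
      proof (rule integral_mono)
        show "integrable mu (\<lambda>x. Y x)" using bmf_integrable[OF bY] by simp
        show "integrable mu (\<lambda>x. \<bar>c11\<bar> * (\<Lambda> * (\<Lambda> * Mk)))" by simp
        fix x assume "x \<in> space mu"
        hence x: "x \<in> \<Omega>" by simp
        have "\<bar>\<psi> x * Ap x\<bar> \<le> \<Lambda> * (\<Lambda> * Mk)"
          unfolding abs_mult using psb Apb x by (intro mult_mono) auto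
        hence "\<bar>c11\<bar> * \<bar>\<psi> x * Ap x\<bar> \<le> \<bar>c11\<bar> * (\<Lambda> * (\<Lambda> * Mk))" by (rule mult_left_mono) simp
        thus "Y x \<le> \<bar>c11\<bar> * (\<Lambda> * (\<Lambda> * Mk))" unfolding Y_def abs_mult[symmetric] by linarith
      qed
      then show ?thesis .
    qed
    also have "\<dots> = \<bar>c11\<bar> * (\<Lambda> * (\<Lambda> * Mk)) * measure mu \<Omega>" by simp
    finally show ?thesis .
  qed
  have FE: "F_E \<Omega> r' b - F_E \<Omega> r b = (\<integral>x. hfun (r' x) (b x) - hfun (r x) (b x) \<partial>mu)"
    unfolding F_E_eq using hfun_integrable[OF r'm bm rb'] hfun_integrable[OF rm bm rb] by simp
  have lin: "(\<integral>x. \<epsilon> * (hfun (r x + t * \<psi> x) (b x) - hfun (r x) (b x)) + t * (\<psi> x * P x) \<partial>mu)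
      = \<epsilon> * (F_E \<Omega> r' b - F_E \<Omega> r b) + t * (\<integral>x. \<psi> x * P x \<partial>mu)"
  proof -
    have i1: "integrable mu (\<lambda>x. hfun (r' x) (b x) - hfun (r x) (b x))"
      using hfun_integrable[OF r'm bm rb'] hfun_integrable[OF rm bm rb] by simp
    have i2: "integrable mu (\<lambda>x. \<psi> x * P x)" by (intro bmf_integrable bmf_mult bps bmf_P)
    show ?thesis unfolding FE using i1 i2 by (simp add: r'_def)
  qed
  have "0 \<le> \<epsilon> * (F_E \<Omega> r' b - F_E \<Omega> r b) + (F_0 \<Omega> K c11 c22 r' b - F_0 \<Omega> K c11 c22 r b)"
    using min by (simp add: F_eps_def algebra_simps)
  also have "\<dots> = \<epsilon> * (F_E \<Omega> r' b - F_E \<Omega> r b) + t * (\<integral>x. \<psi> x * P x \<partial>mu) + t^2 * (\<integral>x. Y x \<partial>mu)"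
    using F0r' iX by simp
  also have "\<dots> \<le> \<epsilon> * (F_E \<Omega> r' b - F_E \<Omega> r b) + t * (\<integral>x. \<psi> x * P x \<partial>mu) + t^2 * (\<bar>c11\<bar> * (\<Lambda> * (\<Lambda> * Mk)) * measure mu \<Omega>)"
    using mult_left_mono[OF iY, of "t^2"] by simp
  finally show ?thesis using lin by simp
qed

end


lemma xlnx_gibbs:
  fixes x y :: real assumes x: "x > 0" and y: "y \<ge> 0"
  shows "x * ln x - y * ln y \<le> (x - y) * (1 + ln x)"
proof (cases "y = 0")
  case True thus ?thesis using x by simp
next
  case False
  hence y0: "y > 0" using y by simp
  have "ln (x / y) \<le> x / y - 1" using x y0 by (intro ln_le_minus_one) simp
  hence "ln x - ln y \<le> x / y - 1" using x y0 by (simp add: ln_div)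
  hence "y * (ln x - ln y) \<le> y * (x / y - 1)" using y0 by (intro mult_left_mono) auto
  hence "y * (ln x - ln y) \<le> x - y" using y0 by (simp add: algebra_simps)
  thus ?thesis by (simp add: algebra_simps)
qed

lemma hfun_diff:
  fixes s s' u :: real
  assumes "s' > 0" "1 - (s' + u) > 0" "s \<ge> 0" "1 - (s + u) \<ge> 0"
  shows "hfun s' u - hfun s u \<le> (s' - s) * (ln s' - ln (1 - (s' + u)))"
proof -
  have a: "s' * ln s' - s * ln s \<le> (s' - s) * (1 + ln s')" using assms by (intro xlnx_gibbs) auto
  have b: "(1 - (s' + u)) * ln (1 - (s' + u)) - (1 - (s + u)) * ln (1 - (s + u))
      \<le> ((1 - (s' + u)) - (1 - (s + u))) * (1 + ln (1 - (s' + u)))" using assms by (intro xlnx_gibbs) auto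
  show ?thesis using a b unfolding hfun_def by (simp add: algebra_simps)
qed

lemma ln_diff_le: "x > 0 \<Longrightarrow> y > 0 \<Longrightarrow> ln x - ln y \<le> (x - y) / (y::real)"
proof -
  assume x: "x > 0" and y: "y > 0"
  have "ln (x / y) \<le> x / y - 1" using x y by (intro ln_le_minus_one) simp
  thus ?thesis using x y by (simp add: ln_div diff_divide_distrib)
qed

context core begin

interpretation mu: finite_measure mu by (rule fin_mu)

lemma transfer:
  assumes U: "U \<in> sets mu" and V: "V \<in> sets mu" and UV: "U \<inter> V = {}"
    and u: "measure mu U > 0" and v: "measure mu V > 0" and t0: "t0 > 0"
    and admU: "\<And>t x. 0 < t \<Longrightarrow> t \<le> t0 \<Longrightarrow> x \<in> U \<Longrightarrow> t / measure mu U \<le> 1 - (r x + b x)"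
    and admV: "\<And>t x. 0 < t \<Longrightarrow> t \<le> t0 \<Longrightarrow> x \<in> V \<Longrightarrow> t / measure mu V \<le> r x"
    and bU: "\<And>t x. 0 < t \<Longrightarrow> t \<le> t0 \<Longrightarrow> x \<in> U \<Longrightarrow>
       \<epsilon> * (hfun (r x + t / measure mu U) (b x) - hfun (r x) (b x)) + t / measure mu U * P x \<le> t / measure mu U * \<alpha> t"
    and bV: "\<And>t x. 0 < t \<Longrightarrow> t \<le> t0 \<Longrightarrow> x \<in> V \<Longrightarrow>
       \<epsilon> * (hfun (r x - t / measure mu V) (b x) - hfun (r x) (b x)) - t / measure mu V * P x \<le> t / measure mu V * \<beta> t"
  shows "\<exists>Cq. \<forall>t. 0 < t \<and> t \<le> t0 \<longrightarrow> 0 \<le> \<alpha> t + \<beta> t + t * Cq"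
proof -
  define uu where "uu = measure mu U"
  define vv where "vv = measure mu V"
  have UO: "U \<subseteq> \<Omega>" using sets.sets_into_space[OF U] by simp
  have VO: "V \<subseteq> \<Omega>" using sets.sets_into_space[OF V] by simp
  have [measurable]: "U \<in> sets mu" "V \<in> sets mu" using U V by auto
  have UO': "U \<inter> \<Omega> = U" "V \<inter> \<Omega> = V" using UO VO by auto
  define \<psi> where "\<psi> x = indicator U x / uu - indicator V x / vv" for x
  define \<Lambda> where "\<Lambda> = 1 / uu + 1 / vv"
  have psm[measurable]: "\<psi> \<in> borel_measurable mu" unfolding \<psi>_def by measurable
  have L0: "0 \<le> \<Lambda>" using u v by (simp add: \<Lambda>_def uu_def vv_def)
  have psb: "\<forall>x\<in>\<Omega>. \<bar>\<psi> x\<bar> \<le> \<Lambda>"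
    using u v UV by (auto simp: \<psi>_def \<Lambda>_def uu_def vv_def indicator_def)
  have iU: "integrable mu (indicator U :: 'a \<Rightarrow> real)" by (rule bmf_integrable, rule bmfI[where F=1]) (auto simp: indicator_def)
  have iV: "integrable mu (indicator V :: 'a \<Rightarrow> real)" by (rule bmf_integrable, rule bmfI[where F=1]) (auto simp: indicator_def)
  have ps0: "(\<integral>x. \<psi> x \<partial>mu) = 0"
    unfolding \<psi>_def using iU iV u v by (simp add: uu_def vv_def UO')
  define Cq where "Cq = \<bar>c11\<bar> * (\<Lambda> * (\<Lambda> * Mk)) * measure mu \<Omega>"
  show ?thesis
  proof (intro exI[of _ Cq] allI impI)
    fix t assume t: "0 < t \<and> t \<le> t0"
    have psU: "\<psi> x = 1 / uu" if "x \<in> U" for x using that UV by (auto simp: \<psi>_def indicator_def)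
    have psV: "\<psi> x = - (1 / vv)" if "x \<in> V" for x using that UV by (auto simp: \<psi>_def indicator_def)
    have ps_else: "\<psi> x = 0" if "x \<notin> U" "x \<notin> V" for x using that by (auto simp: \<psi>_def)
    have adm': "\<forall>x\<in>\<Omega>. 0 \<le> r x + t * \<psi> x \<and> r x + t * \<psi> x + b x \<le> 1"
    proof
      fix x assume x: "x \<in> \<Omega>"
      show "0 \<le> r x + t * \<psi> x \<and> r x + t * \<psi> x + b x \<le> 1"
      proof (cases "x \<in> U")
        case True
        thus ?thesis using psU[OF True] admU[of t x] t rb x u by (auto simp: uu_def intro: add_nonneg_nonneg)
      next
        case nU: False
        show ?thesis
        proof (cases "x \<in> V")
          case True
          have a: "t / vv \<le> r x" using admV[of t x] t True by (simp add: vv_def)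
          have c: "0 < t / vv" using t v by (simp add: vv_def)
          have "t * \<psi> x = - (t / vv)" using psV[OF True] by simp
          moreover have "0 \<le> b x" "r x + b x \<le> 1" using rb x by auto
          ultimately show ?thesis using a c by linarith
        qed (use ps_else nU rb x in auto)
      qed
    qed
    have mi: "0 \<le> (\<integral>x. \<epsilon> * (hfun (r x + t * \<psi> x) (b x) - hfun (r x) (b x)) + t * (\<psi> x * P x) \<partial>mu) + t^2 * Cq"
      unfolding Cq_def using t by (intro MI[OF psm psb L0 ps0]) (use adm' in auto)
    have rb'': "\<forall>x\<in>\<Omega>. 0 \<le> r x + t * \<psi> x \<and> 0 \<le> b x \<and> r x + t * \<psi> x + b x \<le> 1" using adm' rb by auto
    have int1: "integrable mu (\<lambda>x. \<epsilon> * (hfun (r x + t * \<psi> x) (b x) - hfun (r x) (b x)) + t * (\<psi> x * P x))"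
    proof -
      have "integrable mu (\<lambda>x. hfun (r x + t * \<psi> x) (b x))"
        by (rule hfun_integrable) (use rb'' in auto)
      moreover have "integrable mu (\<lambda>x. hfun (r x) (b x))" by (rule hfun_integrable) (use rb in auto)
      moreover have "integrable mu (\<lambda>x. \<psi> x * P x)" by (intro bmf_integrable bmf_mult bmfI[OF psm psb] bmf_P)
      ultimately show ?thesis by simp
    qed
    have int2: "integrable mu (\<lambda>x. indicator U x * (t / uu * \<alpha> t) + indicator V x * (t / vv * \<beta> t))"
      using iU iV by simp
    have "(\<integral>x. \<epsilon> * (hfun (r x + t * \<psi> x) (b x) - hfun (r x) (b x)) + t * (\<psi> x * P x) \<partial>mu)
        \<le> (\<integral>x. indicator U x * (t / uu * \<alpha> t) + indicator V x * (t / vv * \<beta> t) \<partial>mu)"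
    proof (rule integral_mono[OF int1 int2])
      fix x assume "x \<in> space mu"
      show "\<epsilon> * (hfun (r x + t * \<psi> x) (b x) - hfun (r x) (b x)) + t * (\<psi> x * P x)
          \<le> indicator U x * (t / uu * \<alpha> t) + indicator V x * (t / vv * \<beta> t)"
      proof (cases "x \<in> U")
        case True
        hence "x \<notin> V" using UV by auto
        thus ?thesis using True bU[of t x] t psU[OF True] by (simp add: uu_def)
      next
        case nU: False
        show ?thesis
        proof (cases "x \<in> V")
          case True
          thus ?thesis using nU bV[of t x] t psV[OF True] by (simp add: vv_def)
        qed (use ps_else nU in simp)
      qed
    qed
    also have "\<dots> = t * \<alpha> t + t * \<beta> t"
      using iU iV u v by (simp add: uu_def vv_def UO')
    finally have "0 \<le> t * \<alpha> t + t * \<beta> t + t^2 * Cq" using mi by linarith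
    hence "0 \<le> t * (\<alpha> t + \<beta> t + t * Cq)" by (simp add: algebra_simps power2_eq_square)
    thus "0 \<le> \<alpha> t + \<beta> t + t * Cq" using t by (simp add: zero_le_mult_iff)
  qed
qed

end


lemma contra_log:
  fixes e K1 K2 t0 :: real
  assumes e: "e > 0" and t0: "t0 > 0" and h: "\<forall>t. 0 < t \<and> t \<le> t0 \<longrightarrow> 0 \<le> e * ln t + K1 + t * K2"
  shows False
proof -
  define t where "t = min t0 (min 1 (exp (- (\<bar>K1\<bar> + \<bar>K2\<bar> + 1) / e)))"
  have t: "0 < t" "t \<le> t0" "t \<le> 1" "t \<le> exp (- (\<bar>K1\<bar> + \<bar>K2\<bar> + 1) / e)" using t0 by (auto simp: t_def)
  have "ln t \<le> ln (exp (- (\<bar>K1\<bar> + \<bar>K2\<bar> + 1) / e))" using t by (subst ln_le_cancel_iff) auto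
  hence "ln t \<le> - (\<bar>K1\<bar> + \<bar>K2\<bar> + 1) / e" by simp
  hence "e * ln t \<le> - (\<bar>K1\<bar> + \<bar>K2\<bar> + 1)" using e by (simp add: field_simps)
  moreover have "t * K2 \<le> \<bar>K2\<bar>"
  proof -
    have "t * K2 \<le> t * \<bar>K2\<bar>" using t by (intro mult_left_mono) auto
    also have "\<dots> \<le> 1 * \<bar>K2\<bar>" using t by (intro mult_right_mono) auto
    finally show ?thesis by simp
  qed
  moreover have "0 \<le> e * ln t + K1 + t * K2" using h t by auto
  ultimately show False by linarith
qed

lemma contra_lin:
  fixes eta K2 t0 :: real
  assumes e: "eta > 0" and t0: "t0 > 0" and h: "\<forall>t. 0 < t \<and> t \<le> t0 \<longrightarrow> 0 \<le> - eta + t * K2"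
  shows False
proof -
  define t where "t = min t0 (eta / (\<bar>K2\<bar> + 1) / 2)"
  have t: "0 < t" "t \<le> t0" "t \<le> eta / (\<bar>K2\<bar> + 1) / 2" using t0 e by (auto simp: t_def)
  have "t * K2 \<le> t * (\<bar>K2\<bar> + 1)" using t by (intro mult_left_mono) auto
  also have "\<dots> \<le> eta / (\<bar>K2\<bar> + 1) / 2 * (\<bar>K2\<bar> + 1)" using t by (intro mult_right_mono) auto
  also have "\<dots> = eta / 2"
  proof -
    have pos: "\<bar>K2\<bar> + 1 > 0" by (simp add: add_nonneg_pos)
    thus ?thesis by (simp add: divide_simps)
  qed
  finally have "t * K2 \<le> eta / 2" .
  moreover have "0 \<le> - eta + t * K2" using h t by auto
  ultimately show False using e by linarith
qed

context kset begin
interpretation mu: finite_measure mu by (rule fin_mu)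

lemma mz_null: "A \<in> sets mu \<Longrightarrow> measure mu A = 0 \<Longrightarrow> A \<in> null_sets mu"
  by (simp add: null_sets_def mu.emeasure_eq_measure)

lemma pos_subset:
  fixes An :: "nat \<Rightarrow> 'a set"
  assumes A: "A \<in> sets mu" "measure mu A > 0" and N: "N \<in> sets mu" "measure mu N = 0"
    and An: "\<And>n. An n \<in> sets mu" and cov: "A \<subseteq> N \<union> (\<Union>n. An n)"
  shows "\<exists>n. measure mu (An n) > 0"
proof (rule ccontr)
  assume "\<not> ?thesis"
  hence "\<And>n. measure mu (An n) = 0" using measure_nonneg[of mu] by (metis not_less order.antisym)
  hence "\<And>n. An n \<in> null_sets mu" using An mz_null by simp
  hence "(\<Union>n. An n) \<in> null_sets mu" by (rule null_sets_UN)
  moreover have "N \<in> null_sets mu" using N mz_null by simp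
  ultimately have "N \<union> (\<Union>n. An n) \<in> null_sets mu" by (intro null_sets.Un)
  hence "A \<in> null_sets mu" by (rule null_sets_subset[OF _ A(1) cov])
  hence "measure mu A = 0" by (rule measure_eq_0_null_sets)
  thus False using A by simp
qed

lemma measure_Om: "measure mu \<Omega> = measure lebesgue \<Omega>"
  by (simp add: measure_restrict_space)

end

context core begin
interpretation mu: finite_measure mu by (rule fin_mu)

lemma level_pos:
  fixes f :: "'a \<Rightarrow> real"
  assumes fm[measurable]: "f \<in> borel_measurable mu" and fb: "\<forall>x\<in>\<Omega>. 0 \<le> f x \<and> f x \<le> 1"
    and I: "(\<integral>x. f x \<partial>mu) > 0"
  shows "\<exists>\<delta>>0. \<delta> < 1 \<and> measure mu {x\<in>\<Omega>. \<delta> \<le> f x} > 0"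
proof -
  define m where "m = measure mu \<Omega>"
  have m0: "m > 0"
  proof (rule ccontr)
    assume "\<not> m > 0"
    hence "m = 0" using measure_nonneg[of mu \<Omega>] by (simp add: m_def)
    moreover have "\<Omega> \<in> sets mu" by (metis sets.top space_mu)
    ultimately have "\<Omega> \<in> null_sets mu" using mz_null[of \<Omega>] by (simp add: m_def)
    hence "AE x in mu. f x = 0" using AE_iff_null_sets[of \<Omega> mu] by (auto elim: AE_mp)
    hence "(\<integral>x. f x \<partial>mu) = 0" by (simp add: integral_eq_zero_AE)
    thus False using I by simp
  qed
  define \<delta> where "\<delta> = min (1/2) ((\<integral>x. f x \<partial>mu) / (2 * m))"
  have d: "0 < \<delta>" "\<delta> < 1" "\<delta> * m \<le> (\<integral>x. f x \<partial>mu) / 2" using m0 I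
    by (auto simp: \<delta>_def min_def field_simps)
  define T where "T = {x\<in>\<Omega>. \<delta> \<le> f x}"
  have Ts[measurable]: "T \<in> sets mu"
  proof -
    have "{x\<in>space mu. \<delta> \<le> f x} \<in> sets mu" by measurable
    thus ?thesis by (simp add: T_def)
  qed
  have "(\<integral>x. f x \<partial>mu) \<le> (\<integral>x. \<delta> + indicator T x \<partial>mu)"
  proof (rule integral_mono)
    show "integrable mu f" by (rule bounded_integrable[where F=1]) (use fb in auto)
    show "integrable mu (\<lambda>x. \<delta> + indicator T x)"
      by (rule bmf_integrable, rule bmfI[where F="\<delta>+1"]) (use d in \<open>auto simp: indicator_def\<close>)
    fix x assume "x \<in> space mu"
    thus "f x \<le> \<delta> + indicator T x" using fb d by (auto simp: T_def indicator_def)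
  qed
  also have "\<dots> = \<delta> * m + measure mu T"
  proof -
    have "integrable mu (indicator T :: 'a \<Rightarrow> real)"
      by (rule bmf_integrable, rule bmfI[where F=1]) (auto simp: indicator_def)
    moreover have "T \<inter> \<Omega> = T" by (auto simp: T_def)
    ultimately show ?thesis by (simp add: m_def mult.commute)
  qed
  finally have "measure mu T > 0" using d I by linarith
  thus ?thesis using d unfolding T_def by blast
qed

end


context core begin
interpretation mu: finite_measure mu by (rule fin_mu)

lemma wf_int: "(\<integral>x. 1 - (r x + b x) \<partial>mu) > 0"
proof -
  have ir: "integrable mu r" by (rule bmf_integrable[OF bmf_r])
  have ib: "integrable mu b" by (rule bmf_integrable[OF bmf_b])
  have "(\<integral>x. 1 - (r x + b x) \<partial>mu) = measure mu \<Omega> - (mr + mb)"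
    using ir ib rint bint by simp
  thus ?thesis using mass measure_Om by simp
qed

lemma wf_meas[measurable]: "(\<lambda>x. 1 - (r x + b x)) \<in> borel_measurable mu" by measurable

lemma sets_mu_pred: assumes [measurable]: "Measurable.pred mu Q" shows "{x\<in>\<Omega>. Q x} \<in> sets mu"
proof -
  have "{x\<in>space mu. Q x} \<in> sets mu" by measurable
  thus ?thesis by simp
qed

lemma P1a: "measure mu {x\<in>\<Omega>. r x + b x = 1 \<and> 1/2 \<le> r x} = 0"
proof (rule ccontr)
  define S where "S = {x\<in>\<Omega>. r x + b x = 1 \<and> 1/2 \<le> r x}"
  assume "measure mu {x\<in>\<Omega>. r x + b x = 1 \<and> 1/2 \<le> r x} \<noteq> 0"
  hence v: "measure mu S > 0" using measure_nonneg[of mu S] unfolding S_def by linarith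
  have Ss: "S \<in> sets mu" unfolding S_def by (rule sets_mu_pred) measurable
  obtain \<delta> where d: "0 < \<delta>" "\<delta> < 1" and Dp: "measure mu {x\<in>\<Omega>. \<delta> \<le> 1 - (r x + b x)} > 0"
    using level_pos[OF wf_meas _ wf_int] rb by fastforce
  define D where "D = {x\<in>\<Omega>. \<delta> \<le> 1 - (r x + b x)}"
  have Ds: "D \<in> sets mu" unfolding D_def by (rule sets_mu_pred) measurable
  have u: "measure mu D > 0" using Dp by (simp add: D_def)
  have DS: "D \<inter> S = {}" using d by (auto simp: D_def S_def)
  define uu where "uu = measure mu D"
  define vv where "vv = measure mu S"
  define t0 where "t0 = min (\<delta> * uu / 2) (vv / 4)"
  have t0: "t0 > 0" using u v d by (simp add: t0_def uu_def vv_def)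
  define \<alpha> where "\<alpha> t = \<epsilon> * ln (2/\<delta>) + PB" for t :: real
  define \<beta> where "\<beta> t = \<epsilon> * (ln (t / vv) + ln 4) + PB" for t
  have "\<exists>Cq. \<forall>t. 0 < t \<and> t \<le> t0 \<longrightarrow> 0 \<le> \<alpha> t + \<beta> t + t * Cq"
  proof (rule transfer[OF Ds Ss DS u v t0])
    fix t x assume t: "0 < t" "t \<le> t0" and x: "x \<in> D"
    have q: "t / measure mu D \<le> \<delta> / 2" using t u unfolding t0_def uu_def
      by (simp add: divide_le_eq mult.commute)
    moreover have "\<delta> \<le> 1 - (r x + b x)" using x by (simp add: D_def)
    ultimately show "t / measure mu D \<le> 1 - (r x + b x)" using d by linarith
  next
    fix t x assume t: "0 < t" "t \<le> t0" and x: "x \<in> S"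
    have "t / measure mu S \<le> 1/4" using t v unfolding t0_def vv_def by (simp add: divide_le_eq)
    moreover have "1/2 \<le> r x" using x by (simp add: S_def)
    ultimately show "t / measure mu S \<le> r x" by linarith
  next
    fix t x assume t: "0 < t" "t \<le> t0" and x: "x \<in> D"
    define q where "q = t / measure mu D"
    have q0: "q > 0" using t u by (simp add: q_def)
    have qd: "q \<le> \<delta> / 2" using t u unfolding t0_def uu_def q_def by (simp add: divide_le_eq mult.commute)
    have xO: "x \<in> \<Omega>" and wx: "\<delta> \<le> 1 - (r x + b x)" using x by (auto simp: D_def)
    have rbx: "0 \<le> r x" "0 \<le> b x" "r x + b x \<le> 1" using rb xO by auto
    have w': "1 - (r x + q + b x) \<ge> \<delta> / 2" using wx qd by linarith
    have hd: "hfun (r x + q) (b x) - hfun (r x) (b x) \<le> (r x + q - r x) * (ln (r x + q) - ln (1 - (r x + q + b x)))"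
      by (rule hfun_diff) (use q0 rbx w' d in auto)
    have l1: "ln (r x + q) \<le> 0" using q0 rbx w' d by (subst ln_le_zero_iff) auto
    have l2: "- ln (1 - (r x + q + b x)) \<le> ln (2 / \<delta>)"
    proof -
      have "ln (\<delta> / 2) \<le> ln (1 - (r x + q + b x))" using w' d by (subst ln_le_cancel_iff) auto
      thus ?thesis using d by (simp add: ln_div)
    qed
    have h1: "hfun (r x + q) (b x) - hfun (r x) (b x) \<le> q * ln (2 / \<delta>)"
    proof -
      have "(r x + q - r x) * (ln (r x + q) - ln (1 - (r x + q + b x))) \<le> q * ln (2 / \<delta>)"
        using l1 l2 q0 by (simp add: mult_left_mono)
      thus ?thesis using hd by linarith
    qed
    have h2: "\<epsilon> * (hfun (r x + q) (b x) - hfun (r x) (b x)) \<le> \<epsilon> * (q * ln (2 / \<delta>))"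
      using h1 eps by (intro mult_left_mono) auto
    have h3: "q * P x \<le> q * PB" using P_bd xO q0 by (intro mult_left_mono) auto
    have "q * \<alpha> t = \<epsilon> * (q * ln (2 / \<delta>)) + q * PB" by (simp add: \<alpha>_def algebra_simps)
    thus "\<epsilon> * (hfun (r x + t / measure mu D) (b x) - hfun (r x) (b x)) + t / measure mu D * P x \<le> t / measure mu D * \<alpha> t"
      using h2 h3 unfolding q_def[symmetric] by linarith
  next
    fix t x assume t: "0 < t" "t \<le> t0" and x: "x \<in> S"
    define q where "q = t / measure mu S"
    have q0: "q > 0" using t v by (simp add: q_def)
    have q4: "q \<le> 1/4" using t v unfolding t0_def vv_def q_def by (simp add: divide_le_eq)
    have xO: "x \<in> \<Omega>" and sx: "r x + b x = 1" "1/2 \<le> r x" using x by (auto simp: S_def)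
    have rbx: "0 \<le> r x" "0 \<le> b x" "r x + b x \<le> 1" using rb xO by auto
    have wq: "1 - (r x - q + b x) = q" using sx by simp
    have hd: "hfun (r x - q) (b x) - hfun (r x) (b x) \<le> (r x - q - r x) * (ln (r x - q) - ln (1 - (r x - q + b x)))"
      by (rule hfun_diff) (use q0 q4 rbx sx in auto)
    have l1: "- ln (r x - q) \<le> ln 4"
    proof -
      have "ln (1/4) \<le> ln (r x - q)" using q4 sx by (subst ln_le_cancel_iff) auto
      thus ?thesis by (simp add: ln_div)
    qed
    have h1: "hfun (r x - q) (b x) - hfun (r x) (b x) \<le> q * (ln q + ln 4)"
    proof -
      have "(r x - q - r x) * (ln (r x - q) - ln (1 - (r x - q + b x))) = q * (ln q - ln (r x - q))"
        unfolding wq by (simp add: algebra_simps)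
      also have "\<dots> \<le> q * (ln q + ln 4)" using l1 q0 by (intro mult_left_mono) auto
      finally show ?thesis using hd by linarith
    qed
    have h2: "\<epsilon> * (hfun (r x - q) (b x) - hfun (r x) (b x)) \<le> \<epsilon> * (q * (ln q + ln 4))"
      using h1 eps by (intro mult_left_mono) auto
    have h3: "- (q * P x) \<le> q * PB"
    proof -
      have "- P x \<le> PB" using P_bd xO by force
      hence "q * (- P x) \<le> q * PB" using q0 by (intro mult_left_mono) auto
      thus ?thesis by simp
    qed
    have "q * \<beta> t = \<epsilon> * (q * (ln q + ln 4)) + q * PB" by (simp add: \<beta>_def q_def vv_def algebra_simps)
    thus "\<epsilon> * (hfun (r x - t / measure mu S) (b x) - hfun (r x) (b x)) - t / measure mu S * P x \<le> t / measure mu S * \<beta> t"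
      using h2 h3 unfolding q_def[symmetric] by linarith
  qed
  then obtain Cq where Cq: "\<forall>t. 0 < t \<and> t \<le> t0 \<longrightarrow> 0 \<le> \<alpha> t + \<beta> t + t * Cq" by blast
  have "\<forall>t. 0 < t \<and> t \<le> t0 \<longrightarrow> 0 \<le> \<epsilon> * ln t + (\<epsilon> * ln (2/\<delta>) + 2 * PB + \<epsilon> * (ln 4 - ln vv)) + t * Cq"
  proof (intro allI impI)
    fix t assume t: "0 < t \<and> t \<le> t0"
    have e: "ln (t / vv) = ln t - ln vv" using t v by (simp add: ln_div vv_def)
    have c: "0 \<le> \<epsilon> * ln (2/\<delta>) + PB + (\<epsilon> * (ln (t / vv) + ln 4) + PB) + t * Cq"
      using Cq t by (simp add: \<alpha>_def \<beta>_def)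
    have c2: "\<epsilon> * (ln (t / vv) + ln 4) = \<epsilon> * ln t - \<epsilon> * ln vv + \<epsilon> * ln 4"
      unfolding e by (simp add: algebra_simps)
    have c3: "\<epsilon> * (ln 4 - ln vv) = \<epsilon> * ln 4 - \<epsilon> * ln vv" by (simp add: algebra_simps)
    show "0 \<le> \<epsilon> * ln t + (\<epsilon> * ln (2/\<delta>) + 2 * PB + \<epsilon> * (ln 4 - ln vv)) + t * Cq"
      using c c2 c3 by linarith
  qed
  thus False by (rule contra_log[OF eps t0])
qed

end


context core begin
interpretation mu: finite_measure mu by (rule fin_mu)

lemma exists_small: "0 < (x::real) \<Longrightarrow> \<exists>n. 1 / real (Suc n) \<le> x"
  using reals_Archimedean[of x] by (metis inverse_eq_divide less_eq_real_def)

lemma P1b: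
  assumes W0: "measure mu {x\<in>\<Omega>. r x + b x = 1} = 0"
  shows "measure mu {x\<in>\<Omega>. r x = 0} = 0"
proof (rule ccontr)
  define Z where "Z = {x\<in>\<Omega>. r x = 0}"
  assume "measure mu {x\<in>\<Omega>. r x = 0} \<noteq> 0"
  hence Zp: "measure mu Z > 0" using measure_nonneg[of mu Z] unfolding Z_def by linarith
  have Zs: "Z \<in> sets mu" unfolding Z_def by (rule sets_mu_pred) measurable
  define N where "N = {x\<in>\<Omega>. r x + b x = 1}"
  have Ns: "N \<in> sets mu" unfolding N_def by (rule sets_mu_pred) measurable
  define An where "An n = {x\<in>\<Omega>. r x = 0 \<and> 1 / real (Suc n) \<le> 1 - (r x + b x)}" for n
  have Ans: "An n \<in> sets mu" for n unfolding An_def by (rule sets_mu_pred) measurable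
  have cov: "Z \<subseteq> N \<union> (\<Union>n. An n)"
  proof
    fix x assume x: "x \<in> Z"
    show "x \<in> N \<union> (\<Union>n. An n)"
    proof (cases "r x + b x = 1")
      case True thus ?thesis using x by (auto simp: N_def Z_def)
    next
      case False
      hence "0 < 1 - (r x + b x)" using rb x by (auto simp: Z_def)
      then obtain n where "1 / real (Suc n) \<le> 1 - (r x + b x)" using exists_small by blast
      thus ?thesis using x by (auto simp: An_def Z_def)
    qed
  qed
  obtain n where An_pos: "measure mu (An n) > 0"
    using pos_subset[OF Zs Zp Ns _ Ans cov] W0 by (auto simp: N_def)
  define \<delta> where "\<delta> = 1 / real (Suc n)"
  have d: "0 < \<delta>" by (simp add: \<delta>_def)
  obtain \<delta>' where d': "0 < \<delta>'" "\<delta>' < 1" and Tp: "measure mu {x\<in>\<Omega>. \<delta>' \<le> r x} > 0"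
    using level_pos[OF rm _] rint mr rb by fastforce
  define U where "U = An n"
  define V where "V = {x\<in>\<Omega>. \<delta>' \<le> r x}"
  have Us: "U \<in> sets mu" unfolding U_def by (rule Ans)
  have Vs: "V \<in> sets mu" unfolding V_def by (rule sets_mu_pred) measurable
  have u: "measure mu U > 0" using An_pos by (simp add: U_def)
  have v: "measure mu V > 0" using Tp by (simp add: V_def)
  have UV: "U \<inter> V = {}" using d' by (auto simp: U_def V_def An_def)
  define uu where "uu = measure mu U"
  define vv where "vv = measure mu V"
  define t0 where "t0 = min (\<delta> * uu / 2) (\<delta>' * vv / 2)"
  have t0: "t0 > 0" using u v d d' by (simp add: t0_def uu_def vv_def)
  define \<alpha> where "\<alpha> t = \<epsilon> * (ln (t / uu) + ln (2/\<delta>)) + PB" for t :: real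
  define \<beta> where "\<beta> t = \<epsilon> * ln (2/\<delta>') + PB" for t :: real
  have Ux: "x \<in> \<Omega>" "r x = 0" "\<delta> \<le> 1 - (r x + b x)" if "x \<in> U" for x
    using that by (auto simp: U_def An_def \<delta>_def)
  have Vx: "x \<in> \<Omega>" "\<delta>' \<le> r x" if "x \<in> V" for x using that by (auto simp: V_def)
  have qU: "t / measure mu U \<le> \<delta> / 2" if "t \<le> t0" for t
    using that u unfolding t0_def uu_def by (simp add: divide_le_eq mult.commute)
  have qV: "t / measure mu V \<le> \<delta>' / 2" if "t \<le> t0" for t
    using that v unfolding t0_def vv_def by (simp add: divide_le_eq mult.commute)
  have "\<exists>Cq. \<forall>t. 0 < t \<and> t \<le> t0 \<longrightarrow> 0 \<le> \<alpha> t + \<beta> t + t * Cq"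
  proof (rule transfer[OF Us Vs UV u v t0])
    fix t x assume t: "0 < t" "t \<le> t0" and x: "x \<in> U"
    show "t / measure mu U \<le> 1 - (r x + b x)" using qU[OF t(2)] Ux[OF x] d by linarith
  next
    fix t x assume t: "0 < t" "t \<le> t0" and x: "x \<in> V"
    show "t / measure mu V \<le> r x" using qV[OF t(2)] Vx[OF x] d' by linarith
  next
    fix t x assume t: "0 < t" "t \<le> t0" and x: "x \<in> U"
    define q where "q = t / measure mu U"
    have q0: "q > 0" using t u by (simp add: q_def)
    have qd: "q \<le> \<delta> / 2" using qU[OF t(2)] by (simp add: q_def)
    note xx = Ux[OF x]
    have rbx: "0 \<le> b x" "r x + b x \<le> 1" using rb xx(1) by auto
    have w': "1 - (q + b x) \<ge> \<delta> / 2" using xx qd by linarith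
    have hd: "hfun (0 + q) (b x) - hfun 0 (b x) \<le> (0 + q - 0) * (ln (0 + q) - ln (1 - (0 + q + b x)))"
      by (rule hfun_diff) (use q0 rbx w' d xx in auto)
    have l2: "- ln (1 - (q + b x)) \<le> ln (2 / \<delta>)"
    proof -
      have "ln (\<delta> / 2) \<le> ln (1 - (q + b x))" using w' d by (subst ln_le_cancel_iff) auto
      thus ?thesis using d by (simp add: ln_div)
    qed
    have h1: "hfun q (b x) - hfun 0 (b x) \<le> q * (ln q + ln (2 / \<delta>))"
    proof -
      have "q * (ln q - ln (1 - (q + b x))) \<le> q * (ln q + ln (2 / \<delta>))"
        using l2 q0 by (intro mult_left_mono) auto
      thus ?thesis using hd by simp
    qed
    have h2: "\<epsilon> * (hfun q (b x) - hfun 0 (b x)) \<le> \<epsilon> * (q * (ln q + ln (2 / \<delta>)))"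
      using h1 eps by (intro mult_left_mono) auto
    have h3: "q * P x \<le> q * PB" using P_bd xx q0 by (intro mult_left_mono) auto
    have "q * \<alpha> t = \<epsilon> * (q * (ln q + ln (2 / \<delta>))) + q * PB" by (simp add: \<alpha>_def q_def uu_def algebra_simps)
    thus "\<epsilon> * (hfun (r x + t / measure mu U) (b x) - hfun (r x) (b x)) + t / measure mu U * P x \<le> t / measure mu U * \<alpha> t"
      using h2 h3 xx(2) unfolding q_def[symmetric] by simp
  next
    fix t x assume t: "0 < t" "t \<le> t0" and x: "x \<in> V"
    define q where "q = t / measure mu V"
    have q0: "q > 0" using t v by (simp add: q_def)
    have qd: "q \<le> \<delta>' / 2" using qV[OF t(2)] by (simp add: q_def)
    note xx = Vx[OF x]
    have rbx: "0 \<le> r x" "0 \<le> b x" "r x + b x \<le> 1" using rb xx(1) by auto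
    have s': "r x - q \<ge> \<delta>' / 2" using xx qd by linarith
    have w'0: "1 - (r x - q + b x) > 0" using rbx q0 by linarith
    have w'1: "1 - (r x - q + b x) \<le> 1" using s' rbx d' by linarith
    have hd: "hfun (r x - q) (b x) - hfun (r x) (b x) \<le> (r x - q - r x) * (ln (r x - q) - ln (1 - (r x - q + b x)))"
      by (rule hfun_diff) (use q0 rbx s' d' w'0 in auto)
    have l1: "- ln (r x - q) \<le> ln (2 / \<delta>')"
    proof -
      have "ln (\<delta>' / 2) \<le> ln (r x - q)" using s' d' by (subst ln_le_cancel_iff) auto
      thus ?thesis using d' by (simp add: ln_div)
    qed
    have l2: "ln (1 - (r x - q + b x)) \<le> 0" using w'0 w'1 by (subst ln_le_zero_iff) auto
    have h1: "hfun (r x - q) (b x) - hfun (r x) (b x) \<le> q * ln (2 / \<delta>')"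
    proof -
      have "(r x - q - r x) * (ln (r x - q) - ln (1 - (r x - q + b x)))
            = q * (ln (1 - (r x - q + b x)) - ln (r x - q))" by (simp add: algebra_simps)
      also have "\<dots> \<le> q * ln (2 / \<delta>')" using l1 l2 q0 by (intro mult_left_mono) auto
      finally show ?thesis using hd by linarith
    qed
    have h2: "\<epsilon> * (hfun (r x - q) (b x) - hfun (r x) (b x)) \<le> \<epsilon> * (q * ln (2 / \<delta>'))"
      using h1 eps by (intro mult_left_mono) auto
    have h3: "- (q * P x) \<le> q * PB"
    proof -
      have "- P x \<le> PB" using P_bd xx by force
      hence "q * (- P x) \<le> q * PB" using q0 by (intro mult_left_mono) auto
      thus ?thesis by simp
    qed
    have "q * \<beta> t = \<epsilon> * (q * ln (2 / \<delta>')) + q * PB" by (simp add: \<beta>_def algebra_simps)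
    thus "\<epsilon> * (hfun (r x - t / measure mu V) (b x) - hfun (r x) (b x)) - t / measure mu V * P x \<le> t / measure mu V * \<beta> t"
      using h2 h3 unfolding q_def[symmetric] by linarith
  qed
  then obtain Cq where Cq: "\<forall>t. 0 < t \<and> t \<le> t0 \<longrightarrow> 0 \<le> \<alpha> t + \<beta> t + t * Cq" by blast
  have "\<forall>t. 0 < t \<and> t \<le> t0 \<longrightarrow> 0 \<le> \<epsilon> * ln t + (\<epsilon> * ln (2/\<delta>) + 2 * PB + \<epsilon> * ln (2/\<delta>') - \<epsilon> * ln uu) + t * Cq"
  proof (intro allI impI)
    fix t assume t: "0 < t \<and> t \<le> t0"
    have e: "ln (t / uu) = ln t - ln uu" using t u by (simp add: ln_div uu_def)
    have c: "0 \<le> \<epsilon> * (ln (t / uu) + ln (2/\<delta>)) + PB + (\<epsilon> * ln (2/\<delta>') + PB) + t * Cq"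
      using Cq t by (simp add: \<alpha>_def \<beta>_def)
    have c2: "\<epsilon> * (ln (t / uu) + ln (2/\<delta>)) = \<epsilon> * ln t - \<epsilon> * ln uu + \<epsilon> * ln (2/\<delta>)"
      unfolding e by (simp add: algebra_simps)
    show "0 \<le> \<epsilon> * ln t + (\<epsilon> * ln (2/\<delta>) + 2 * PB + \<epsilon> * ln (2/\<delta>') - \<epsilon> * ln uu) + t * Cq"
      using c c2 by linarith
  qed
  thus False by (rule contra_log[OF eps t0])
qed

end


context core begin
interpretation mu: finite_measure mu by (rule fin_mu)

definition "fE x = \<epsilon> * (ln (r x) - ln (1 - (r x + b x))) + P x"

lemma fE_meas[measurable]: "fE \<in> borel_measurable mu" unfolding fE_def by measurable

lemma P2:
  assumes W0: "measure mu {x\<in>\<Omega>. r x + b x = 1} = 0" and R0: "measure mu {x\<in>\<Omega>. r x = 0} = 0"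
    and ac: "a < c"
  shows "measure mu {x\<in>\<Omega>. fE x < a} = 0 \<or> measure mu {x\<in>\<Omega>. c < fE x} = 0"
proof (rule ccontr)
  assume "\<not> ?thesis"
  hence Ap: "measure mu {x\<in>\<Omega>. fE x < a} > 0" and Bp: "measure mu {x\<in>\<Omega>. c < fE x} > 0"
    using measure_nonneg[of mu] by (auto simp: less_le)
  define N where "N = {x\<in>\<Omega>. r x = 0} \<union> {x\<in>\<Omega>. r x + b x = 1}"
  have N1s: "{x\<in>\<Omega>. r x = 0} \<in> sets mu" by (rule sets_mu_pred) measurable
  have N2s: "{x\<in>\<Omega>. r x + b x = 1} \<in> sets mu" by (rule sets_mu_pred) measurable
  have Ns: "N \<in> sets mu" unfolding N_def using N1s N2s by auto
  have N0: "measure mu N = 0"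
  proof -
    have "N \<in> null_sets mu" unfolding N_def
      using mz_null[OF N1s R0] mz_null[OF N2s W0] by (rule null_sets.Un)
    thus ?thesis by (rule measure_eq_0_null_sets)
  qed
  have cover: "\<exists>n. 1 / real (Suc n) \<le> r x \<and> 1 / real (Suc n) \<le> 1 - (r x + b x)" if "x \<in> \<Omega>" "x \<notin> N" for x
  proof -
    have "0 < min (r x) (1 - (r x + b x))" using that rb by (auto simp: N_def less_le)
    then obtain n where "1 / real (Suc n) \<le> min (r x) (1 - (r x + b x))" using exists_small by blast
    thus ?thesis by auto
  qed
  define An where "An n = {x\<in>\<Omega>. fE x < a \<and> 1 / real (Suc n) \<le> r x \<and> 1 / real (Suc n) \<le> 1 - (r x + b x)}" for n
  define Bn where "Bn n = {x\<in>\<Omega>. c < fE x \<and> 1 / real (Suc n) \<le> r x \<and> 1 / real (Suc n) \<le> 1 - (r x + b x)}" for n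
  have Ans: "An n \<in> sets mu" for n unfolding An_def by (rule sets_mu_pred) measurable
  have Bns: "Bn n \<in> sets mu" for n unfolding Bn_def by (rule sets_mu_pred) measurable
  have As: "{x\<in>\<Omega>. fE x < a} \<in> sets mu" by (rule sets_mu_pred) measurable
  have Bs: "{x\<in>\<Omega>. c < fE x} \<in> sets mu" by (rule sets_mu_pred) measurable
  have covA: "{x\<in>\<Omega>. fE x < a} \<subseteq> N \<union> (\<Union>n. An n)"
  proof
    fix x assume x: "x \<in> {x\<in>\<Omega>. fE x < a}"
    show "x \<in> N \<union> (\<Union>n. An n)"
    proof (cases "x \<in> N")
      case False thus ?thesis using cover[of x] x by (auto simp: An_def)
    qed simp
  qed
  have covB: "{x\<in>\<Omega>. c < fE x} \<subseteq> N \<union> (\<Union>n. Bn n)"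
  proof
    fix x assume x: "x \<in> {x\<in>\<Omega>. c < fE x}"
    show "x \<in> N \<union> (\<Union>n. Bn n)"
    proof (cases "x \<in> N")
      case False thus ?thesis using cover[of x] x by (auto simp: Bn_def)
    qed simp
  qed
  obtain n1 where n1: "measure mu (An n1) > 0" using pos_subset[OF As Ap Ns N0 Ans covA] by blast
  obtain n2 where n2: "measure mu (Bn n2) > 0" using pos_subset[OF Bs Bp Ns N0 Bns covB] by blast
  define \<delta>1 where "\<delta>1 = 1 / real (Suc n1)"
  define \<delta>2 where "\<delta>2 = 1 / real (Suc n2)"
  have d1: "0 < \<delta>1" and d2: "0 < \<delta>2" by (simp_all add: \<delta>1_def \<delta>2_def)
  define U where "U = An n1"
  define V where "V = Bn n2"
  have Us: "U \<in> sets mu" unfolding U_def by (rule Ans)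
  have Vs: "V \<in> sets mu" unfolding V_def by (rule Bns)
  have u: "measure mu U > 0" using n1 by (simp add: U_def)
  have v: "measure mu V > 0" using n2 by (simp add: V_def)
  have UV: "U \<inter> V = {}" using ac by (auto simp: U_def V_def An_def Bn_def)
  define uu where "uu = measure mu U"
  define vv where "vv = measure mu V"
  define t0 where "t0 = min (\<delta>1 * uu / 2) (\<delta>2 * vv / 2)"
  have t0: "t0 > 0" using u v d1 d2 by (simp add: t0_def uu_def vv_def)
  define \<alpha> where "\<alpha> t = a + 3 * \<epsilon> * (t / uu) / \<delta>1" for t :: real
  define \<beta> where "\<beta> t = - c + 3 * \<epsilon> * (t / vv) / \<delta>2" for t :: real
  have Ux: "x \<in> \<Omega>" "fE x < a" "\<delta>1 \<le> r x" "\<delta>1 \<le> 1 - (r x + b x)" if "x \<in> U" for x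
    using that by (auto simp: U_def An_def \<delta>1_def)
  have Vx: "x \<in> \<Omega>" "c < fE x" "\<delta>2 \<le> r x" "\<delta>2 \<le> 1 - (r x + b x)" if "x \<in> V" for x
    using that by (auto simp: V_def Bn_def \<delta>2_def)
  have qU: "t / measure mu U \<le> \<delta>1 / 2" if "t \<le> t0" for t
    using that u unfolding t0_def uu_def by (simp add: divide_le_eq mult.commute)
  have qV: "t / measure mu V \<le> \<delta>2 / 2" if "t \<le> t0" for t
    using that v unfolding t0_def vv_def by (simp add: divide_le_eq mult.commute)
  have "\<exists>Cq. \<forall>t. 0 < t \<and> t \<le> t0 \<longrightarrow> 0 \<le> \<alpha> t + \<beta> t + t * Cq"
  proof (rule transfer[OF Us Vs UV u v t0])
    fix t x assume t: "0 < t" "t \<le> t0" and x: "x \<in> U"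
    show "t / measure mu U \<le> 1 - (r x + b x)" using qU[OF t(2)] Ux[OF x] d1 by linarith
  next
    fix t x assume t: "0 < t" "t \<le> t0" and x: "x \<in> V"
    show "t / measure mu V \<le> r x" using qV[OF t(2)] Vx[OF x] d2 by linarith
  next
    fix t x assume t: "0 < t" "t \<le> t0" and x: "x \<in> U"
    define q where "q = t / measure mu U"
    have q0: "q > 0" using t u by (simp add: q_def)
    have qd: "q \<le> \<delta>1 / 2" using qU[OF t(2)] by (simp add: q_def)
    note xx = Ux[OF x]
    have rbx: "0 \<le> b x" using rb xx(1) by auto
    define w where "w = 1 - (r x + b x)"
    define w' where "w' = 1 - (r x + q + b x)"
    have ww: "w' = w - q" by (simp add: w_def w'_def)
    have w'p: "w' \<ge> \<delta>1 / 2" using xx qd by (simp add: w'_def)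
    have rp: "r x > 0" "w > 0" using xx d1 by (auto simp: w_def)
    have hd: "hfun (r x + q) (b x) - hfun (r x) (b x) \<le> (r x + q - r x) * (ln (r x + q) - ln w')"
      unfolding w'_def by (rule hfun_diff) (use q0 rbx xx d1 w'p in \<open>auto simp: w'_def\<close>)
    have l1: "ln (r x + q) - ln (r x) \<le> q / \<delta>1"
    proof -
      have "ln (r x + q) - ln (r x) \<le> (r x + q - r x) / r x" using rp q0 by (intro ln_diff_le) auto
      also have "\<dots> = q / r x" by simp
      also have "\<dots> \<le> q / \<delta>1" using xx d1 q0 by (intro divide_left_mono) auto
      finally show ?thesis .
    qed
    have l2: "ln w - ln w' \<le> 2 * q / \<delta>1"
    proof -
      have "ln w - ln w' \<le> (w - w') / w'" using rp w'p d1 by (intro ln_diff_le) auto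
      also have "\<dots> = q / w'" by (simp add: ww)
      also have "\<dots> \<le> q / (\<delta>1 / 2)" using w'p d1 q0 by (intro divide_left_mono) auto
      finally show ?thesis by (simp add: mult.commute)
    qed
    have h1: "hfun (r x + q) (b x) - hfun (r x) (b x) \<le> q * ((ln (r x) - ln w) + 3 * q / \<delta>1)"
    proof -
      have "ln (r x + q) - ln w' \<le> (ln (r x) - ln w) + 3 * q / \<delta>1" using l1 l2 by simp
      hence "q * (ln (r x + q) - ln w') \<le> q * ((ln (r x) - ln w) + 3 * q / \<delta>1)"
        using q0 by (intro mult_left_mono) auto
      thus ?thesis using hd by simp
    qed
    have h2: "\<epsilon> * (hfun (r x + q) (b x) - hfun (r x) (b x)) \<le> \<epsilon> * (q * ((ln (r x) - ln w) + 3 * q / \<delta>1))"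
      using h1 eps by (intro mult_left_mono) auto
    have e1: "\<epsilon> * (q * ((ln (r x) - ln w) + 3 * q / \<delta>1)) + q * P x = q * (fE x + 3 * \<epsilon> * q / \<delta>1)"
      by (simp add: fE_def w_def algebra_simps)
    have e2: "q * (fE x + 3 * \<epsilon> * q / \<delta>1) \<le> q * \<alpha> t"
      using xx(2) q0 by (intro mult_left_mono) (auto simp: \<alpha>_def q_def uu_def)
    show "\<epsilon> * (hfun (r x + t / measure mu U) (b x) - hfun (r x) (b x)) + t / measure mu U * P x \<le> t / measure mu U * \<alpha> t"
      using h2 e1 e2 unfolding q_def[symmetric] by linarith
  next
    fix t x assume t: "0 < t" "t \<le> t0" and x: "x \<in> V"
    define q where "q = t / measure mu V"
    have q0: "q > 0" using t v by (simp add: q_def)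
    have qd: "q \<le> \<delta>2 / 2" using qV[OF t(2)] by (simp add: q_def)
    note xx = Vx[OF x]
    have rbx: "0 \<le> b x" using rb xx(1) by auto
    define w where "w = 1 - (r x + b x)"
    define w' where "w' = 1 - (r x - q + b x)"
    have ww: "w' = w + q" by (simp add: w_def w'_def)
    have rp: "r x > 0" "w > 0" using xx d2 by (auto simp: w_def)
    have s': "r x - q \<ge> \<delta>2 / 2" using xx qd by linarith
    have w'p: "w' > 0" using rp q0 ww by linarith
    have hd: "hfun (r x - q) (b x) - hfun (r x) (b x) \<le> (r x - q - r x) * (ln (r x - q) - ln w')"
      unfolding w'_def by (rule hfun_diff) (use q0 rbx xx d2 s' w'p rp in \<open>auto simp: w'_def w_def\<close>)
    have l1: "ln w' - ln w \<le> q / \<delta>2"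
    proof -
      have "ln w' - ln w \<le> (w' - w) / w" using rp w'p by (intro ln_diff_le) auto
      also have "\<dots> = q / w" by (simp add: ww)
      also have "\<dots> \<le> q / \<delta>2" using xx d2 q0 by (intro divide_left_mono) (auto simp: w_def)
      finally show ?thesis .
    qed
    have l2: "ln (r x) - ln (r x - q) \<le> 2 * q / \<delta>2"
    proof -
      have "ln (r x) - ln (r x - q) \<le> (r x - (r x - q)) / (r x - q)" using rp s' d2 by (intro ln_diff_le) auto
      also have "\<dots> = q / (r x - q)" by simp
      also have "\<dots> \<le> q / (\<delta>2 / 2)" using s' d2 q0 by (intro divide_left_mono) auto
      finally show ?thesis by (simp add: mult.commute)
    qed
    have h1: "hfun (r x - q) (b x) - hfun (r x) (b x) \<le> q * (- (ln (r x) - ln w) + 3 * q / \<delta>2)"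
    proof -
      have "(r x - q - r x) * (ln (r x - q) - ln w') = q * (ln w' - ln (r x - q))" by (simp add: algebra_simps)
      also have "\<dots> \<le> q * (- (ln (r x) - ln w) + 3 * q / \<delta>2)"
        using l1 l2 q0 by (intro mult_left_mono) auto
      finally show ?thesis using hd by linarith
    qed
    have h2: "\<epsilon> * (hfun (r x - q) (b x) - hfun (r x) (b x)) \<le> \<epsilon> * (q * (- (ln (r x) - ln w) + 3 * q / \<delta>2))"
      using h1 eps by (intro mult_left_mono) auto
    have e1: "\<epsilon> * (q * (- (ln (r x) - ln w) + 3 * q / \<delta>2)) - q * P x = q * (- fE x + 3 * \<epsilon> * q / \<delta>2)"
      by (simp add: fE_def w_def algebra_simps)
    have e2: "q * (- fE x + 3 * \<epsilon> * q / \<delta>2) \<le> q * \<beta> t"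
      using xx(2) q0 by (intro mult_left_mono) (auto simp: \<beta>_def q_def vv_def)
    show "\<epsilon> * (hfun (r x - t / measure mu V) (b x) - hfun (r x) (b x)) - t / measure mu V * P x \<le> t / measure mu V * \<beta> t"
      using h2 e1 e2 unfolding q_def[symmetric] by linarith
  qed
  then obtain Cq where Cq: "\<forall>t. 0 < t \<and> t \<le> t0 \<longrightarrow> 0 \<le> \<alpha> t + \<beta> t + t * Cq" by blast
  have "\<forall>t. 0 < t \<and> t \<le> t0 \<longrightarrow> 0 \<le> - (c - a) + t * (3 * \<epsilon> / uu / \<delta>1 + 3 * \<epsilon> / vv / \<delta>2 + Cq)"
  proof (intro allI impI)
    fix t assume t: "0 < t \<and> t \<le> t0"
    have "0 \<le> \<alpha> t + \<beta> t + t * Cq" using Cq t by blast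
    moreover have "\<alpha> t + \<beta> t + t * Cq = - (c - a) + t * (3 * \<epsilon> / uu / \<delta>1 + 3 * \<epsilon> / vv / \<delta>2 + Cq)"
      by (simp add: \<alpha>_def \<beta>_def algebra_simps)
    ultimately show "0 \<le> - (c - a) + t * (3 * \<epsilon> / uu / \<delta>1 + 3 * \<epsilon> / vv / \<delta>2 + Cq)" by simp
  qed
  thus False using contra_lin[of "c - a" t0] ac t0 by auto
qed

end


context kset begin
interpretation mu: finite_measure mu by (rule fin_mu)

lemma aec:
  fixes f :: "'a \<Rightarrow> real"
  assumes fm[measurable]: "f \<in> borel_measurable mu" and Om: "measure mu \<Omega> > 0"
    and H: "\<And>a c. a < c \<Longrightarrow> measure mu {x\<in>\<Omega>. f x < a} = 0 \<or> measure mu {x\<in>\<Omega>. c < f x} = 0"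
  shows "\<exists>C. AE x in mu. f x = C"
proof -
  define L where "L a = {x\<in>\<Omega>. f x < a}" for a
  define G where "G c = {x\<in>\<Omega>. c < f x}" for c
  have Ls: "L a \<in> sets mu" for a
  proof - have "{x\<in>space mu. f x < a} \<in> sets mu" by measurable thus ?thesis by (simp add: L_def) qed
  have Gs: "G c \<in> sets mu" for c
  proof - have "{x\<in>space mu. c < f x} \<in> sets mu" by measurable thus ?thesis by (simp add: G_def) qed
  have Oms: "\<Omega> \<in> sets mu" by (metis sets.top space_mu)
  have es: "{} \<in> sets mu" "measure mu {} = 0" by auto
  have mpos: "0 \<le> measure mu X" for X by simp
  define S where "S = {a. measure mu (L a) = 0}"
  have down: "a' \<in> S" if "a \<in> S" "a' \<le> a" for a a'
  proof -
    have "L a' \<subseteq> L a" using that by (auto simp: L_def)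
    hence "measure mu (L a') \<le> measure mu (L a)" using Ls by (intro mu.finite_measure_mono) auto
    hence "measure mu (L a') \<le> 0" using that by (simp add: S_def)
    hence "measure mu (L a') = 0" using measure_nonneg[of mu "L a'"] by linarith
    thus ?thesis by (simp add: S_def)
  qed
  have ne: "\<exists>a. a \<in> S"
  proof (rule ccontr)
    assume "\<not> ?thesis"
    hence pos: "measure mu (L a) > 0" for a using mpos[of "L a"] by (auto simp: S_def less_le)
    have G0: "measure mu (G c) = 0" for c using H[of "c - 1" c] pos[of "c - 1"] by (simp add: L_def G_def)
    have "\<Omega> \<subseteq> {} \<union> (\<Union>n. G (- real n))"
    proof
      fix x assume "x \<in> \<Omega>"
      moreover obtain n where "- f x < real n" using reals_Archimedean2 by blast
      ultimately show "x \<in> {} \<union> (\<Union>n. G (- real n))" by (auto simp: G_def intro!: exI[of _ n])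
    qed
    from pos_subset[OF Oms Om es Gs this] show False using G0 by simp
  qed
  have "\<Omega> \<subseteq> {} \<union> (\<Union>n. L (real n))"
  proof
    fix x assume "x \<in> \<Omega>"
    moreover obtain n where "f x < real n" using reals_Archimedean2 by blast
    ultimately show "x \<in> {} \<union> (\<Union>n. L (real n))" by (auto simp: L_def)
  qed
  from pos_subset[OF Oms Om es Ls this] obtain n where n: "measure mu (L (real n)) > 0" by blast
  have bdd: "bdd_above S"
  proof (rule bdd_aboveI[of _ "real n"])
    fix a assume "a \<in> S"
    show "a \<le> real n"
    proof (rule ccontr)
      assume "\<not> a \<le> real n"
      hence "real n \<in> S" using down[OF \<open>a \<in> S\<close>] by simp
      thus False using n by (simp add: S_def)
    qed
  qed
  define C where "C = Sup S"
  have Sne: "S \<noteq> {}" using ne by blast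
  have lowC: "measure mu (L C) = 0"
  proof (rule ccontr)
    assume "measure mu (L C) \<noteq> 0"
    hence p: "measure mu (L C) > 0" by (simp add: less_le)
    have "L C \<subseteq> {} \<union> (\<Union>k. L (C - inverse (real (Suc k))))"
    proof
      fix x assume "x \<in> L C"
      hence "0 < C - f x" "x \<in> \<Omega>" by (auto simp: L_def)
      then obtain k where "inverse (real (Suc k)) < C - f x" using reals_Archimedean[of "C - f x"] by blast
      thus "x \<in> {} \<union> (\<Union>k. L (C - inverse (real (Suc k))))" using \<open>x \<in> \<Omega>\<close> by (auto simp: L_def intro!: exI[of _ k])
    qed
    from pos_subset[OF Ls p es Ls this] obtain k where k: "measure mu (L (C - inverse (real (Suc k)))) > 0" by blast
    have "C - inverse (real (Suc k)) < Sup S" by (simp add: C_def)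
    then obtain s where "s \<in> S" "C - inverse (real (Suc k)) < s" using less_cSup_iff[OF Sne bdd] by blast
    hence "C - inverse (real (Suc k)) \<in> S" using down by simp
    thus False using k by (simp add: S_def)
  qed
  have highC: "measure mu (G C) = 0"
  proof (rule ccontr)
    assume "measure mu (G C) \<noteq> 0"
    hence p: "measure mu (G C) > 0" by (simp add: less_le)
    have "G C \<subseteq> {} \<union> (\<Union>k. G (C + inverse (real (Suc k))))"
    proof
      fix x assume "x \<in> G C"
      hence "0 < f x - C" "x \<in> \<Omega>" by (auto simp: G_def)
      then obtain k where "inverse (real (Suc k)) < f x - C" using reals_Archimedean[of "f x - C"] by blast
      thus "x \<in> {} \<union> (\<Union>k. G (C + inverse (real (Suc k))))" using \<open>x \<in> \<Omega>\<close> by (auto simp: G_def intro!: exI[of _ k])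
    qed
    from pos_subset[OF Gs p es Gs this] obtain k where k: "measure mu (G (C + inverse (real (Suc k)))) > 0" by blast
    define a where "a = C + inverse (real (Suc k)) / 2"
    have ip: "inverse (real (Suc k)) > 0" by simp
    have "a \<notin> S"
    proof
      assume "a \<in> S"
      hence "a \<le> Sup S" using bdd by (rule cSup_upper)
      thus False using ip by (simp add: a_def C_def)
    qed
    hence "measure mu (L a) \<noteq> 0" by (simp add: S_def)
    moreover have "a < C + inverse (real (Suc k))" using ip by (simp add: a_def)
    ultimately have "measure mu (G (C + inverse (real (Suc k)))) = 0"
      using H[of a "C + inverse (real (Suc k))"] by (simp add: L_def G_def)
    thus False using k by simp
  qed
  have "L C \<union> G C \<in> null_sets mu" using mz_null[OF Ls lowC] mz_null[OF Gs highC] by (rule null_sets.Un)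
  moreover have "{x\<in>space mu. \<not> f x = C} \<subseteq> L C \<union> G C" by (auto simp: L_def G_def)
  ultimately have "AE x in mu. f x = C" by (rule AE_I')
  thus ?thesis by blast
qed

end


lemma F_eps_swap: "F_eps \<epsilon> \<Omega> K c22 c11 b r = F_eps \<epsilon> \<Omega> K c11 c22 r b"
proof -
  have "F_E \<Omega> b r = F_E \<Omega> r b" unfolding F_E_def
    by (rule Bochner_Integration.integral_cong) (simp_all add: algebra_simps)
  moreover have "F_0 \<Omega> K c22 c11 b r = F_0 \<Omega> K c11 c22 r b" unfolding F_0_def
    by (rule Bochner_Integration.integral_cong) (simp_all add: algebra_simps)
  ultimately show ?thesis by (simp add: F_eps_def)
qed

lemma adm_swap: "(b', r') \<in> admissible_set \<Omega> mb mr \<longleftrightarrow> (r', b') \<in> admissible_set \<Omega> mr mb"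
  by (auto simp: admissible_set_def add.commute)

context core begin
interpretation mu: finite_measure mu by (rule fin_mu)

lemma core_main:
  "(\<exists>C1. AE x in mu. \<epsilon> * (ln (r x) - ln (1 - (r x + b x))) + 2 * (c11 * A x - B x) = C1) \<and>
   (\<exists>C2. AE x in mu. \<epsilon> * (ln (b x) - ln (1 - (r x + b x))) + 2 * (c22 * B x - A x) = C2)"
proof -
  interpret sw: core \<Omega> K b r \<epsilon> c22 c11 mb mr
  proof unfold_locales
    show "\<forall>x\<in>\<Omega>. 0 \<le> b x \<and> 0 \<le> r x \<and> b x + r x \<le> 1" using rb by (auto simp: add.commute)
    show "mb + mr < measure lebesgue \<Omega>" using mass by simp
    show "\<forall>(r', b')\<in>admissible_set \<Omega> mb mr. F_eps \<epsilon> \<Omega> K c22 c11 b r \<le> F_eps \<epsilon> \<Omega> K c22 c11 r' b'"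
    proof (clarify)
      fix r' b' assume "(r', b') \<in> admissible_set \<Omega> mb mr"
      hence "(b', r') \<in> admissible_set \<Omega> mr mb" using adm_swap by blast
      hence "F_eps \<epsilon> \<Omega> K c11 c22 r b \<le> F_eps \<epsilon> \<Omega> K c11 c22 b' r'" using minim by blast
      thus "F_eps \<epsilon> \<Omega> K c22 c11 b r \<le> F_eps \<epsilon> \<Omega> K c22 c11 r' b'" by (simp add: F_eps_swap)
    qed
  qed (rule op bd adm bm rm bint rint eps mb mr)+
  have S1: "{x\<in>\<Omega>. r x + b x = 1 \<and> 1/2 \<le> r x} \<in> sets mu" by (rule sets_mu_pred) measurable
  have S2: "{x\<in>\<Omega>. b x + r x = 1 \<and> 1/2 \<le> b x} \<in> sets mu" by (rule sets_mu_pred) measurable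
  have S3: "{x\<in>\<Omega>. r x + b x = 1} \<in> sets mu" by (rule sets_mu_pred) measurable
  have W0: "measure mu {x\<in>\<Omega>. r x + b x = 1} = 0"
  proof -
    have N1: "{x\<in>\<Omega>. r x + b x = 1 \<and> 1/2 \<le> r x} \<union> {x\<in>\<Omega>. b x + r x = 1 \<and> 1/2 \<le> b x} \<in> null_sets mu"
      using mz_null[OF S1 P1a] mz_null[OF S2 sw.P1a] by (rule null_sets.Un)
    have sub: "{x\<in>\<Omega>. r x + b x = 1} \<subseteq> {x\<in>\<Omega>. r x + b x = 1 \<and> 1/2 \<le> r x} \<union> {x\<in>\<Omega>. b x + r x = 1 \<and> 1/2 \<le> b x}"
    proof
      fix x assume "x \<in> {x\<in>\<Omega>. r x + b x = 1}"
      hence x: "x \<in> \<Omega>" "r x + b x = 1" by auto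
      show "x \<in> {x\<in>\<Omega>. r x + b x = 1 \<and> 1/2 \<le> r x} \<union> {x\<in>\<Omega>. b x + r x = 1 \<and> 1/2 \<le> b x}"
      proof (cases "1/2 \<le> r x")
        case True thus ?thesis using x by simp
      next
        case False
        hence "1/2 \<le> b x" "b x + r x = 1" using x by linarith+
        thus ?thesis using x by simp
      qed
    qed
    have "{x\<in>\<Omega>. r x + b x = 1} \<in> null_sets mu" by (rule null_sets_subset[OF N1 S3 sub])
    thus ?thesis by (rule measure_eq_0_null_sets)
  qed
  have W0': "measure mu {x\<in>\<Omega>. b x + r x = 1} = 0"
  proof -
    have "{x\<in>\<Omega>. b x + r x = 1} = {x\<in>\<Omega>. r x + b x = 1}" by (auto simp: add.commute)
    thus ?thesis using W0 by simp
  qed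
  have R0: "measure mu {x\<in>\<Omega>. r x = 0} = 0" by (rule P1b[OF W0])
  have B0: "measure mu {x\<in>\<Omega>. b x = 0} = 0" by (rule sw.P1b[OF W0'])
  have Om: "measure mu \<Omega> > 0" using mass mr mb measure_Om by simp
  obtain C1 where C1: "AE x in mu. fE x = C1"
    using aec[OF fE_meas Om P2[OF W0 R0]] by blast
  obtain C2 where C2: "AE x in mu. sw.fE x = C2"
    using aec[OF sw.fE_meas Om sw.P2[OF W0' B0]] by blast
  have "AE x in mu. \<epsilon> * (ln (r x) - ln (1 - (r x + b x))) + 2 * (c11 * A x - B x) = C1"
    using C1 by (simp add: fE_def P_def)
  moreover have "AE x in mu. \<epsilon> * (ln (b x) - ln (1 - (r x + b x))) + 2 * (c22 * B x - A x) = C2"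
    using C2 by (simp add: sw.fE_def sw.P_def add.commute)
  ultimately show ?thesis by blast
qed

end


theorem proposition2p7:
  fixes \<Omega> :: "'a::euclidean_space set" and K :: "'a \<Rightarrow> real"
    and \<epsilon> c11 c22 mr mb :: real and r b :: "'a \<Rightarrow> real"
  assumes "open \<Omega>" and "bounded \<Omega>"
    and "\<epsilon> > 0" and "c11 \<le> 0" and "c22 \<le> 0"
    and "admissible \<Omega> K"
    and "mr > 0" and "mb > 0" and "mr + mb < measure lebesgue \<Omega>"
    and "(r, b) \<in> admissible_set \<Omega> mr mb"
    and "\<forall>(r', b') \<in> admissible_set \<Omega> mr mb.
           F_eps \<epsilon> \<Omega> K c11 c22 r b \<le> F_eps \<epsilon> \<Omega> K c11 c22 r' b'"
  shows "(\<forall>\<phi>. essentially_bounded \<Omega> \<phi> \<and> (\<integral>x. \<phi> x \<partial>lebesgue_on \<Omega>) = 0 \<longrightarrow>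
            integrable (lebesgue_on \<Omega>) (\<lambda>x. \<phi> x * (\<epsilon> * (ln (r x) - ln (1 - (r x + b x)))
                 + 2 * (c11 * conv \<Omega> K r x - conv \<Omega> K b x))) \<and>
            (\<integral>x. \<phi> x * (\<epsilon> * (ln (r x) - ln (1 - (r x + b x)))
                 + 2 * (c11 * conv \<Omega> K r x - conv \<Omega> K b x)) \<partial>lebesgue_on \<Omega>) = 0 \<and>
            integrable (lebesgue_on \<Omega>) (\<lambda>x. \<phi> x * (\<epsilon> * (ln (b x) - ln (1 - (r x + b x)))
                 + 2 * (c22 * conv \<Omega> K b x - conv \<Omega> K r x))) \<and>
            (\<integral>x. \<phi> x * (\<epsilon> * (ln (b x) - ln (1 - (r x + b x)))
                 + 2 * (c22 * conv \<Omega> K b x - conv \<Omega> K r x)) \<partial>lebesgue_on \<Omega>) = 0)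
       \<and> (\<exists>C1 C2. AE x in lebesgue_on \<Omega>.
            \<epsilon> * (ln (r x) - ln (1 - (r x + b x))) + 2 * (c11 * conv \<Omega> K r x - conv \<Omega> K b x) = C1 \<and>
            \<epsilon> * (ln (b x) - ln (1 - (r x + b x))) + 2 * (c22 * conv \<Omega> K b x - conv \<Omega> K r x) = C2)"
proof -
  note A = assms
  interpret kset \<Omega> K using A(1,2,6) by unfold_locales
  interpret mu: finite_measure "lebesgue_on \<Omega>" by (rule fin_mu)
  from A(10) have rI: "integrable (lebesgue_on \<Omega>) r" and bI: "integrable (lebesgue_on \<Omega>) b"
    and AEb: "AE x in lebesgue_on \<Omega>. 0 \<le> r x \<and> 0 \<le> b x \<and> r x + b x \<le> 1"
    and rint: "(\<integral>x. r x \<partial>lebesgue_on \<Omega>) = mr" and bint: "(\<integral>x. b x \<partial>lebesgue_on \<Omega>) = mb"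
    unfolding admissible_set_def by auto
  have rm[measurable]: "r \<in> borel_measurable (lebesgue_on \<Omega>)" using rI by (rule borel_measurable_integrable)
  have bm[measurable]: "b \<in> borel_measurable (lebesgue_on \<Omega>)" using bI by (rule borel_measurable_integrable)
  define r0 where "r0 x = (if 0 \<le> r x \<and> 0 \<le> b x \<and> r x + b x \<le> 1 then r x else 0)" for x
  define b0 where "b0 x = (if 0 \<le> r x \<and> 0 \<le> b x \<and> r x + b x \<le> 1 then b x else 0)" for x
  have r0m[measurable]: "r0 \<in> borel_measurable (lebesgue_on \<Omega>)" unfolding r0_def by measurable
  have b0m[measurable]: "b0 \<in> borel_measurable (lebesgue_on \<Omega>)" unfolding b0_def by measurable
  have AEr: "AE x in lebesgue_on \<Omega>. r0 x = r x" using AEb by eventually_elim (simp add: r0_def)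
  have AEb': "AE x in lebesgue_on \<Omega>. b0 x = b x" using AEb by eventually_elim (simp add: b0_def)
  have cr: "conv \<Omega> K r0 x = conv \<Omega> K r x" for x by (rule conv_cong_AE[OF r0m rm AEr])
  have cb: "conv \<Omega> K b0 x = conv \<Omega> K b x" for x by (rule conv_cong_AE[OF b0m bm AEb'])
  have crm[measurable]: "conv \<Omega> K r \<in> borel_measurable (lebesgue_on \<Omega>)" by (rule conv_meas[OF rm])
  have cbm[measurable]: "conv \<Omega> K b \<in> borel_measurable (lebesgue_on \<Omega>)" by (rule conv_meas[OF bm])
  have r0int: "(\<integral>x. r0 x \<partial>lebesgue_on \<Omega>) = mr" using rint integral_cong_AE[OF r0m rm AEr] by simp
  have b0int: "(\<integral>x. b0 x \<partial>lebesgue_on \<Omega>) = mb" using bint integral_cong_AE[OF b0m bm AEb'] by simp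
  have FE: "F_E \<Omega> r0 b0 = F_E \<Omega> r b" unfolding F_E_def
    by (rule integral_cong_AE) (use AEr AEb' in \<open>auto elim: AE_mp\<close>)
  have F0: "F_0 \<Omega> K c11 c22 r0 b0 = F_0 \<Omega> K c11 c22 r b" unfolding F_0_def cr cb
    by (rule integral_cong_AE) (use AEr AEb' in \<open>auto elim: AE_mp\<close>)
  have Feq: "F_eps \<epsilon> \<Omega> K c11 c22 r0 b0 = F_eps \<epsilon> \<Omega> K c11 c22 r b" by (simp add: F_eps_def FE F0)
  interpret c: core \<Omega> K r0 b0 \<epsilon> c11 c22 mr mb
  proof unfold_locales
    show "\<forall>x\<in>\<Omega>. 0 \<le> r0 x \<and> 0 \<le> b0 x \<and> r0 x + b0 x \<le> 1" by (simp add: r0_def b0_def)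
    show "\<forall>(r', b')\<in>admissible_set \<Omega> mr mb. F_eps \<epsilon> \<Omega> K c11 c22 r0 b0 \<le> F_eps \<epsilon> \<Omega> K c11 c22 r' b'"
      using A(11) Feq by simp
  qed (rule A(1) A(2) A(6) r0m b0m r0int b0int A(3) A(7) A(8) A(9))+
  obtain C1 C2 where C1': "AE x in lebesgue_on \<Omega>. \<epsilon> * (ln (r0 x) - ln (1 - (r0 x + b0 x))) + 2 * (c11 * conv \<Omega> K r0 x - conv \<Omega> K b0 x) = C1"
    and C2': "AE x in lebesgue_on \<Omega>. \<epsilon> * (ln (b0 x) - ln (1 - (r0 x + b0 x))) + 2 * (c22 * conv \<Omega> K b0 x - conv \<Omega> K r0 x) = C2"
    using c.core_main by blast
  have C1: "AE x in lebesgue_on \<Omega>. \<epsilon> * (ln (r x) - ln (1 - (r x + b x))) + 2 * (c11 * conv \<Omega> K r x - conv \<Omega> K b x) = C1"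
    using C1' AEr AEb' by eventually_elim (simp add: cr cb)
  have C2: "AE x in lebesgue_on \<Omega>. \<epsilon> * (ln (b x) - ln (1 - (r x + b x))) + 2 * (c22 * conv \<Omega> K b x - conv \<Omega> K r x) = C2"
    using C2' AEr AEb' by eventually_elim (simp add: cr cb)
  have part1: "integrable (lebesgue_on \<Omega>) (\<lambda>x. \<phi> x * g x) \<and> (\<integral>x. \<phi> x * g x \<partial>lebesgue_on \<Omega>) = 0"
    if phi: "essentially_bounded \<Omega> \<phi>" "(\<integral>x. \<phi> x \<partial>lebesgue_on \<Omega>) = 0"
      and gm: "g \<in> borel_measurable (lebesgue_on \<Omega>)" and gC: "AE x in lebesgue_on \<Omega>. g x = C"
    for \<phi> g C
  proof -
    from phi(1) obtain B where pm[measurable]: "\<phi> \<in> borel_measurable (lebesgue_on \<Omega>)"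
      and pB: "AE x in lebesgue_on \<Omega>. \<bar>\<phi> x\<bar> \<le> B" unfolding essentially_bounded_def by blast
    have pI: "integrable (lebesgue_on \<Omega>) \<phi>" by (rule mu.integrable_const_bound[where B=B]) (use pB in auto)
    have eq: "AE x in lebesgue_on \<Omega>. \<phi> x * g x = C * \<phi> x" using gC by eventually_elim simp
    have m1: "(\<lambda>x. \<phi> x * g x) \<in> borel_measurable (lebesgue_on \<Omega>)" using pm gm by (rule borel_measurable_times)
    have m2: "(\<lambda>x. C * \<phi> x) \<in> borel_measurable (lebesgue_on \<Omega>)" using pm by simp
    have "integrable (lebesgue_on \<Omega>) (\<lambda>x. \<phi> x * g x)"
      using integrable_cong_AE[OF m1 m2 eq] pI by simp
    moreover have "(\<integral>x. \<phi> x * g x \<partial>lebesgue_on \<Omega>) = 0"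
      using integral_cong_AE[OF m1 m2 eq] phi(2) by simp
    ultimately show ?thesis by blast
  qed
  have g1m: "(\<lambda>x. \<epsilon> * (ln (r x) - ln (1 - (r x + b x))) + 2 * (c11 * conv \<Omega> K r x - conv \<Omega> K b x)) \<in> borel_measurable (lebesgue_on \<Omega>)"
    by measurable
  have g2m: "(\<lambda>x. \<epsilon> * (ln (b x) - ln (1 - (r x + b x))) + 2 * (c22 * conv \<Omega> K b x - conv \<Omega> K r x)) \<in> borel_measurable (lebesgue_on \<Omega>)"
    by measurable
  define g1 where "g1 = (\<lambda>x. \<epsilon> * (ln (r x) - ln (1 - (r x + b x))) + 2 * (c11 * conv \<Omega> K r x - conv \<Omega> K b x))"
  define g2 where "g2 = (\<lambda>x. \<epsilon> * (ln (b x) - ln (1 - (r x + b x))) + 2 * (c22 * conv \<Omega> K b x - conv \<Omega> K r x))"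
  have P: "\<forall>\<phi>. essentially_bounded \<Omega> \<phi> \<and> (\<integral>x. \<phi> x \<partial>lebesgue_on \<Omega>) = 0 \<longrightarrow>
     integrable (lebesgue_on \<Omega>) (\<lambda>x. \<phi> x * g1 x) \<and> (\<integral>x. \<phi> x * g1 x \<partial>lebesgue_on \<Omega>) = 0 \<and>
     integrable (lebesgue_on \<Omega>) (\<lambda>x. \<phi> x * g2 x) \<and> (\<integral>x. \<phi> x * g2 x \<partial>lebesgue_on \<Omega>) = 0"
  proof (intro allI impI)
    fix \<phi> assume h: "essentially_bounded \<Omega> \<phi> \<and> (\<integral>x. \<phi> x \<partial>lebesgue_on \<Omega>) = 0"
    have g1m': "g1 \<in> borel_measurable (lebesgue_on \<Omega>)" using g1m by (simp add: g1_def)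
    have g2m': "g2 \<in> borel_measurable (lebesgue_on \<Omega>)" using g2m by (simp add: g2_def)
    have C1g: "AE x in lebesgue_on \<Omega>. g1 x = C1" using C1 by (simp add: g1_def)
    have C2g: "AE x in lebesgue_on \<Omega>. g2 x = C2" using C2 by (simp add: g2_def)
    show "integrable (lebesgue_on \<Omega>) (\<lambda>x. \<phi> x * g1 x) \<and> (\<integral>x. \<phi> x * g1 x \<partial>lebesgue_on \<Omega>) = 0 \<and>
     integrable (lebesgue_on \<Omega>) (\<lambda>x. \<phi> x * g2 x) \<and> (\<integral>x. \<phi> x * g2 x \<partial>lebesgue_on \<Omega>) = 0"
      using part1[OF h[THEN conjunct1] h[THEN conjunct2] g1m' C1g] part1[OF h[THEN conjunct1] h[THEN conjunct2] g2m' C2g]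
      by blast
  qed
  have E: "\<exists>C1 C2. AE x in lebesgue_on \<Omega>. g1 x = C1 \<and> g2 x = C2"
    using C1 C2 unfolding g1_def g2_def by (intro exI[of _ C1] exI[of _ C2]) (auto elim: AE_mp)
  show ?thesis using P E unfolding g1_def g2_def by blast
qed


end
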